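(* Let $C>0$ and $\delta>0$, let $f \in C((0,\infty);(0,\infty))$ be asymptotically increasing with $\lim_{x\to\infty} f(x)/x = \infty$, and let $\psi \in C([-\delta,0];(0,\infty))$. Suppose \[ \int_\eta^\infty \frac{du}{\sqrt{\int_0^u f(s)\,ds}} = \infty \quad \text{for all } \eta>0. \] Then solutions of \[ z'(t) = C\int_{t-\delta}^t f(z(s))\,ds, \quad t\ge 0; \qquad z(t)=\psi(t), \quad t\in[-\delta,0], \] satisfy $z \in C([-\delta,\infty);(0,\infty))$. Similarly, if $w \in C([0,\infty);[0,\infty))$ with $w(0)>0$, then solutions of \[ y'(t) = \int_{t-\delta}^t w(t-s) f(y(s))\,ds, \quad t \ge 0; \qquad y(t)=\psi(t), \quad t\in[-\delta,0], \] satisfy $y \in C([-\delta,\infty);(0,\infty))$.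
   Context: "$f$ is asymptotically increasing" means that there is a continuous increasing function $\phi:(0,\infty)\to(0,\infty)$ with $f(x)/\phi(x)\to 1$ as $x\to\infty$. *)

theory Defs
  imports "HOL-Analysis.Analysis"
begin

definition asymp_increasing :: "(real \<Rightarrow> real) \<Rightarrow> bool" where
  "asymp_increasing f \<longleftrightarrow>
     (\<exists>\<phi>. continuous_on {0<..} \<phi> \<and> strict_mono_on {0<..} \<phi> \<and>
          (\<forall>x>0. \<phi> x > 0) \<and> ((\<lambda>x. f x / \<phi> x) \<longlongrightarrow> 1) at_top)"

text \<open>Solution of z'(t) = C * int_{t-delta}^t f(z(s)) ds for t in I (I = [0,T) or [0,inf)),
  z = psi on [-delta,0]; z continuous and positive on [-delta,0] union I.
  The derivative at t is taken within I (one-sided at t = 0).\<close>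
definition dde_sol1 ::
  "real \<Rightarrow> real \<Rightarrow> (real \<Rightarrow> real) \<Rightarrow> (real \<Rightarrow> real) \<Rightarrow> real set \<Rightarrow> (real \<Rightarrow> real) \<Rightarrow> bool" where
  "dde_sol1 C \<delta> f \<psi> I z \<longleftrightarrow>
     continuous_on ({-\<delta>..0} \<union> I) z \<and>
     (\<forall>t\<in>{-\<delta>..0} \<union> I. 0 < z t) \<and>
     (\<forall>t\<in>{-\<delta>..0}. z t = \<psi> t) \<and>
     (\<forall>t\<in>I. (z has_real_derivative (C * integral {t-\<delta>..t} (\<lambda>s. f (z s)))) (at t within I))"

definition dde_sol2 ::
  "real \<Rightarrow> (real \<Rightarrow> real) \<Rightarrow> (real \<Rightarrow> real) \<Rightarrow> (real \<Rightarrow> real) \<Rightarrow> real set \<Rightarrow> (real \<Rightarrow> real) \<Rightarrow> bool" where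
  "dde_sol2 \<delta> w f \<psi> I y \<longleftrightarrow>
     continuous_on ({-\<delta>..0} \<union> I) y \<and>
     (\<forall>t\<in>{-\<delta>..0} \<union> I. 0 < y t) \<and>
     (\<forall>t\<in>{-\<delta>..0}. y t = \<psi> t) \<and>
     (\<forall>t\<in>I. (y has_real_derivative (integral {t-\<delta>..t} (\<lambda>s. w (t - s) * f (y s)))) (at t within I))"

end

theory Submission
  imports Defs "HOL-Complex_Analysis.Great_Picard"
begin

lemma mono_within:
  fixes f f' :: "real \<Rightarrow> real"
  assumes ab: "a \<le> b" and c: "continuous_on {a..b} f"
    and d: "\<And>t. t \<in> {a..b} \<Longrightarrow> (f has_real_derivative f' t) (at t within {a..b})"
    and nn: "\<And>t. t \<in> {a..b} \<Longrightarrow> f' t \<ge> 0"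
  shows "f a \<le> f b"
proof (rule DERIV_nonneg_imp_increasing_open[OF ab _ c])
  fix x assume x: "a < x" "x < b"
  then have "(f has_real_derivative f' x) (at x)"
    using d[of x] at_within_Icc_at[OF x] by auto
  then show "\<exists>y. DERIV f x :> y \<and> y \<ge> 0" using nn[of x] x by auto
qed

lemma mono_within':
  fixes f f' :: "real \<Rightarrow> real"
  assumes c: "continuous_on {a..b} f"
    and d: "\<And>t. t \<in> {a..b} \<Longrightarrow> (f has_real_derivative f' t) (at t within {a..b})"
    and nn: "\<And>t. t \<in> {a..b} \<Longrightarrow> f' t \<ge> 0"
    and st: "s \<in> {a..b}" "t \<in> {a..b}" "s \<le> t"
  shows "f s \<le> f t"
proof (rule mono_within[OF st(3)])
  show "continuous_on {s..t} f" using c by (rule continuous_on_subset) (use st in auto)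
  fix x assume x: "x \<in> {s..t}"
  then have xab: "x \<in> {a..b}" using st by auto
  show "(f has_real_derivative f' x) (at x within {s..t})"
    by (rule has_field_derivative_subset[OF d[OF xab]]) (use st in auto)
  show "f' x \<ge> 0" using nn xab by auto
qed


lemma deriv_cont_on:
  fixes f :: "real \<Rightarrow> real"
  assumes "\<And>t. t \<in> S \<Longrightarrow> (f has_real_derivative f' t) (at t within S)"
  shows "continuous_on S f"
  using assms DERIV_continuous continuous_on_eq_continuous_within by blast

lemma apriori:
  fixes z d G :: "real \<Rightarrow> real"
  assumes Gc: "continuous_on UNIV G" and Gm: "mono G" and Gp: "\<And>x. 0 < G x"
    and K: "0 < K" and P0: "0 < P0" and ab: "a \<le> b"
    and zc: "continuous_on {a..b} z"
    and zd: "\<And>t. t \<in> {a..b} \<Longrightarrow> (z has_real_derivative d t) (at t within {a..b})"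
    and dle: "\<And>t. t \<in> {a..b} \<Longrightarrow> d t \<le> K * (P0 + integral {a..t} (\<lambda>s. G (z s)))"
    and za: "z a \<le> x0"
    and t: "t \<in> {a..b}"
  shows "\<exists>y \<ge> max x0 (z t). integral {x0..y} (\<lambda>u. 1 / sqrt (K*(K*P0^2 + 2*integral {x0..u} G))) \<le> t - a"
proof -
  let ?Gz = "\<lambda>s. G (z s)"
  have Gzc: "continuous_on {a..b} ?Gz"
    using continuous_on_compose2[OF Gc zc] by auto
  define P where "P = (\<lambda>t. P0 + integral {a..t} ?Gz)"
  have Pd: "(P has_real_derivative G (z s)) (at s within {a..b})" if s: "s \<in> {a..b}" for s
  proof -
    have "((\<lambda>x. P0 + integral {a..x} ?Gz) has_real_derivative (0 + G (z s))) (at s within {a..b})"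
      by (intro DERIV_add DERIV_const integral_has_real_derivative Gzc s)
    then show ?thesis by (simp add: P_def)
  qed
  have Pc: "continuous_on {a..b} P" by (rule deriv_cont_on[OF Pd])
  have Pge: "P s \<ge> P0" if s: "s \<in> {a..b}" for s
  proof -
    have "continuous_on {a..s} ?Gz" using Gzc by (rule continuous_on_subset) (use s in auto)
    then have "integral {a..s} ?Gz \<ge> 0"
      by (intro integral_nonneg integrable_continuous_interval) (auto intro: less_imp_le Gp)
    then show ?thesis by (simp add: P_def)
  qed
  define Y where "Y = (\<lambda>t. x0 + K * integral {a..t} P)"
  have Yd: "(Y has_real_derivative K * P s) (at s within {a..b})" if s: "s \<in> {a..b}" for s
  proof -
    have "((\<lambda>x. x0 + K * integral {a..x} P) has_real_derivative (0 + K * P s)) (at s within {a..b})"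
      by (intro DERIV_add DERIV_const DERIV_cmult integral_has_real_derivative Pc s)
    then show ?thesis by (simp add: Y_def)
  qed
  have Yc: "continuous_on {a..b} Y" by (rule deriv_cont_on[OF Yd])
  have Ya: "Y a = x0" by (simp add: Y_def)
  have KP: "0 \<le> K * P s" if "s \<in> {a..b}" for s using Pge[OF that] K P0 by simp
  have Ymono: "Y s \<le> Y s'" if "s \<in> {a..b}" "s' \<in> {a..b}" "s \<le> s'" for s s'
    by (rule mono_within'[OF Yc Yd KP that])
  have Ygx0: "Y s \<ge> x0" if "s \<in> {a..b}" for s
    using Ymono[of a s] that ab Ya by auto
  have zY: "z s \<le> Y s" if s: "s \<in> {a..b}" for s
  proof -
    have "Y a - z a \<le> Y s - z s"
    proof (rule mono_within'[where f="\<lambda>t. Y t - z t" and f'="\<lambda>t. K * P t - d t"])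
      show "continuous_on {a..b} (\<lambda>t. Y t - z t)" by (intro continuous_intros Yc zc)
      fix x assume x: "x \<in> {a..b}"
      show "((\<lambda>t. Y t - z t) has_real_derivative K * P x - d x) (at x within {a..b})"
        by (intro DERIV_diff Yd zd x)
      show "0 \<le> K * P x - d x" using dle[OF x] by (simp add: P_def)
    qed (use s ab in auto)
    then show ?thesis using za Ya by simp
  qed
  define Yb where "Yb = Y b"
  have YinS: "Y s \<in> {x0..Yb}" if "s \<in> {a..b}" for s
    using Ygx0[OF that] Ymono[of s b] that ab by (auto simp: Yb_def)
  define I where "I = (\<lambda>u. integral {x0..u} G)"
  have Gc': "continuous_on {x0..Yb} G" using Gc by (rule continuous_on_subset) auto
  have Id: "(I has_real_derivative G u) (at u within {x0..Yb})" if "u \<in> {x0..Yb}" for u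
    unfolding I_def by (rule integral_has_real_derivative[OF Gc' that])
  have Ige: "I u \<ge> 0" if "u \<ge> x0" for u
  proof -
    have "continuous_on {x0..u} G" using Gc by (rule continuous_on_subset) auto
    then show ?thesis unfolding I_def
      by (intro integral_nonneg integrable_continuous_interval) (auto intro: less_imp_le Gp)
  qed
  have IYd: "((\<lambda>t. I (Y t)) has_real_derivative G (Y s) * (K * P s)) (at s within {a..b})"
    if s: "s \<in> {a..b}" for s
  proof -
    have "(I has_real_derivative G (Y s)) (at (Y s) within (Y ` {a..b}))"
      by (rule has_field_derivative_subset[OF Id]) (use YinS s in auto)
    from DERIV_image_chain[OF this Yd[OF s]] show ?thesis by (simp add: o_def)
  qed
  define E where "E = (\<lambda>t. K * (P t)^2 - 2 * I (Y t))"
  have Ed: "((\<lambda>t. - E t) has_real_derivative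
      - (K * (2 * P s * G (z s)) - 2 * (G (Y s) * (K * P s)))) (at s within {a..b})"
    if s: "s \<in> {a..b}" for s
  proof -
    have h1: "((\<lambda>t. (P t)^2) has_real_derivative 2 * (G (z s) * P s)) (at s within {a..b})"
      using DERIV_power_Suc[OF Pd[OF s], of 1] by (simp add: numeral_2_eq_2)
    show ?thesis unfolding E_def
      by (rule DERIV_cong[OF DERIV_minus[OF DERIV_diff[OF DERIV_cmult[OF h1] DERIV_cmult[OF IYd[OF s]]]]])
         (simp add: algebra_simps)
  qed
  have Ele: "E s \<le> E a" if s: "s \<in> {a..b}" for s
  proof -
    have "- E a \<le> - E s"
    proof (rule mono_within'[OF _ Ed])
      show "continuous_on {a..b} (\<lambda>t. - E t)" unfolding E_def
        by (intro continuous_intros Pc continuous_on_compose2[OF deriv_cont_on[OF Id] Yc])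
           (use YinS in auto)
      fix x assume x: "x \<in> {a..b}"
      have "G (z x) \<le> G (Y x)" using Gm zY[OF x] by (rule monoD)
      then have "K * P x * G (z x) \<le> K * P x * G (Y x)"
        using KP[OF x] by (rule mult_left_mono)
      then show "0 \<le> - (K * (2 * P x * G (z x)) - 2 * (G (Y x) * (K * P x)))"
        by (simp add: algebra_simps)
    qed (use s ab in auto)
    then show ?thesis by simp
  qed
  define \<rho> where "\<rho> = (\<lambda>u. sqrt (K*(K*P0^2 + 2*I u)))"
  have \<rho>pos: "\<rho> u > 0" if "u \<ge> x0" for u
    using Ige[OF that] K P0 by (simp add: \<rho>_def add_pos_nonneg)
  have KPle: "K * P s \<le> \<rho> (Y s)" if s: "s \<in> {a..b}" for s
  proof -
    have "E a = K * P0^2" by (simp add: E_def Ya P_def I_def)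
    then have "K * (P s)^2 \<le> K*P0^2 + 2 * I (Y s)" using Ele[OF s] by (simp add: E_def)
    then have "K * (K * (P s)^2) \<le> K*(K*P0^2 + 2 * I (Y s))" using K by simp
    then have "sqrt ((K * P s)^2) \<le> \<rho> (Y s)" unfolding \<rho>_def
      by (intro real_sqrt_le_mono) (simp add: power2_eq_square algebra_simps)
    then show ?thesis using KP[OF s] by simp
  qed
  define q where "q = (\<lambda>u. 1 / \<rho> u)"
  have qc: "continuous_on {x0..Yb} q"
  proof -
    have "continuous_on {x0..Yb} I" by (rule deriv_cont_on[OF Id])
    then have "continuous_on {x0..Yb} \<rho>" unfolding \<rho>_def by (intro continuous_intros)
    then show ?thesis unfolding q_def using \<rho>pos by (intro continuous_intros) force+
  qed
  define \<Phi> where "\<Phi> = (\<lambda>y. integral {x0..y} q)"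
  have \<Phi>d: "(\<Phi> has_real_derivative q u) (at u within {x0..Yb})" if "u \<in> {x0..Yb}" for u
    unfolding \<Phi>_def by (rule integral_has_real_derivative[OF qc that])
  have \<Phi>Yd: "((\<lambda>t. \<Phi> (Y t)) has_real_derivative q (Y s) * (K * P s)) (at s within {a..b})"
    if s: "s \<in> {a..b}" for s
  proof -
    have "(\<Phi> has_real_derivative q (Y s)) (at (Y s) within (Y ` {a..b}))"
      by (rule has_field_derivative_subset[OF \<Phi>d]) (use YinS s in auto)
    from DERIV_image_chain[OF this Yd[OF s]] show ?thesis by (simp add: o_def)
  qed
  have "(a - a) - \<Phi> (Y a) \<le> (t - a) - \<Phi> (Y t)"
  proof (rule mono_within'[where f="\<lambda>t. (t - a) - \<Phi> (Y t)" and f'="\<lambda>s. (1 - 0) - q (Y s) * (K * P s)"])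
    show "continuous_on {a..b} (\<lambda>t. (t - a) - \<Phi> (Y t))"
      by (intro continuous_intros continuous_on_compose2[OF deriv_cont_on[OF \<Phi>d] Yc])
         (use YinS in auto)
    fix x assume x: "x \<in> {a..b}"
    show "((\<lambda>t. (t - a) - \<Phi> (Y t)) has_real_derivative (1 - 0) - q (Y x) * (K * P x)) (at x within {a..b})"
      by (intro DERIV_diff DERIV_ident DERIV_const \<Phi>Yd x)
    have "q (Y x) * (K * P x) \<le> q (Y x) * \<rho> (Y x)"
      using KPle[OF x] \<rho>pos[OF Ygx0[OF x]] by (simp add: q_def divide_right_mono)
    also have "\<dots> = 1" using \<rho>pos[OF Ygx0[OF x]] by (simp add: q_def)
    finally show "0 \<le> (1 - 0) - q (Y x) * (K * P x)" by simp
  qed (use t ab in auto)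
  then have "\<Phi> (Y t) \<le> t - a" by (simp add: Ya \<Phi>_def)
  moreover have "Y t \<ge> max x0 (z t)" using Ygx0[OF t] zY[OF t] by simp
  ultimately show ?thesis
    by (intro exI[of _ "Y t"]) (simp add: \<Phi>_def q_def \<rho>_def I_def)
qed


lemma cont_int_max:
  fixes G :: "real \<Rightarrow> real"
  assumes Gc: "continuous_on UNIV G"
  shows "continuous_on UNIV (\<lambda>u. integral {c..max u c} G)"
proof (rule continuous_at_imp_continuous_on, intro ballI)
  fix u :: real
  define b where "b = max u c + 1"
  have c1: "continuous_on {c..b} (\<lambda>v. integral {c..v} G)"
    by (rule indefinite_integral_continuous_1[OF integrable_continuous_interval])
       (rule continuous_on_subset[OF Gc], auto)
  have "continuous_on {..<b} (\<lambda>u. integral {c..max u c} G)"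
    by (rule continuous_on_compose2[OF c1, of _ "\<lambda>u. max u c"])
       (auto intro!: continuous_intros simp: b_def)
  then show "isCont (\<lambda>u. integral {c..max u c} G) u"
    by (rule continuous_on_interior) (auto simp: b_def interior_open)
qed

lemma osg_b:
  fixes f G :: "real \<Rightarrow> real"
  assumes f_cont: "continuous_on {0<..} f" and f_pos: "\<forall>x>0. f x > 0"
    and Gc: "continuous_on UNIV G" and Gp: "\<And>x. 0 < G x"
    and X: "X > 0" and \<mu>: "\<mu> > 0"
    and GB: "\<And>x. x \<ge> X \<Longrightarrow> G x \<le> 4 * f x + B'"
    and f\<mu>: "\<And>x. x \<ge> X \<Longrightarrow> f x \<ge> \<mu>"
    and osgood: "\<forall>\<eta>>0. (\<integral>\<^sup>+ u\<in>{\<eta><..}.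
        ennreal (1 / sqrt (enn2real (\<integral>\<^sup>+ s\<in>{0<..u}. ennreal (f s) \<partial>lborel))) \<partial>lborel) = \<infinity>"
    and K: "K > 0" and P0: "P0 > 0"
  shows "\<exists>R\<ge>x0. integral {x0..R} (\<lambda>u. 1 / sqrt (K*(K*P0^2 + 2*integral {x0..u} G))) > L"
proof (rule ccontr)
  assume "\<not> ?thesis"
  then have bndL: "\<And>R. R \<ge> x0 \<Longrightarrow> integral {x0..R} (\<lambda>u. 1 / sqrt (K*(K*P0^2 + 2*integral {x0..u} G))) \<le> L"
    by force
  define I where "I = (\<lambda>u. integral {x0..u} G)"
  define q where "q = (\<lambda>u. 1 / sqrt (K*(K*P0^2 + 2*I u)))"
  have Gint: "G integrable_on {a..b}" for a b
    by (rule integrable_continuous_interval, rule continuous_on_subset[OF Gc]) auto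
  have fint: "f integrable_on {a..b}" if "a > 0" for a b
    by (rule integrable_continuous_interval, rule continuous_on_subset[OF f_cont]) (use that in auto)
  have Ige: "I u \<ge> 0" for u
    unfolding I_def by (rule integral_nonneg[OF Gint]) (auto intro: less_imp_le Gp)
  define X' where "X' = max x0 X"
  define J where "J = (\<lambda>u. integral {X..u} f)"
  define B'' where "B'' = max B' 0"
  have JI: "I u \<le> I X' + (4 + B''/\<mu>) * J u" if u: "u \<ge> X'" for u
  proof -
    have "I u = I X' + integral {X'..u} G"
      unfolding I_def using Henstock_Kurzweil_Integration.integral_combine[OF _ u Gint, of x0] by (simp add: X'_def)
    moreover have "integral {X'..u} G \<le> integral {X'..u} (\<lambda>x. 4 * f x + B'')"
      by (rule integral_le[OF Gint]) (use fint X in \<open>auto simp: X'_def B''_def intro!: integrable_add integrable_cmul\<close>, meson GB add_left_mono max.cobounded1 order_trans)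
    moreover have "integral {X'..u} (\<lambda>x. 4 * f x + B'') = 4 * integral {X'..u} f + B'' * (u - X')"
      using fint[of X' u] X u by (simp add: X'_def integral_add integrable_const_ivl)
    moreover have "integral {X'..u} f \<le> J u"
    proof -
      have "J u = integral {X..X'} f + integral {X'..u} f"
        unfolding J_def using Henstock_Kurzweil_Integration.integral_combine[OF _ u fint[OF X]] by (simp add: X'_def)
      moreover have "integral {X..X'} f \<ge> 0"
        by (rule integral_nonneg[OF fint[OF X]]) (use X f_pos in \<open>auto intro: less_imp_le\<close>)
      ultimately show ?thesis by simp
    qed
    moreover have "\<mu> * (u - X) \<le> J u"
    proof -
      have "integral {X..u} (\<lambda>x. \<mu>) \<le> J u"
        unfolding J_def by (rule integral_le[OF _ fint[OF X]]) (use f\<mu> in auto)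
      then show ?thesis using u by (simp add: X'_def mult.commute)
    qed
    moreover have "B'' * (u - X') \<le> B'' * (u - X)"
      by (intro mult_left_mono) (auto simp: X'_def B''_def)
    moreover have "B'' * (u - X) \<le> B''/\<mu> * J u"
    proof -
      have "B'' * (\<mu> * (u - X)) \<le> B'' * J u"
        by (intro mult_left_mono calculation(5)) (auto simp: B''_def)
      then show ?thesis using \<mu> by (simp add: field_simps)
    qed
    moreover have "B''/\<mu> \<ge> 0" using \<mu> by (simp add: B''_def)
    ultimately have "I u \<le> I X' + 4 * J u + B''/\<mu> * J u" by linarith
    then show ?thesis by (simp add: ring_distribs)
  qed
  define c1 where "c1 = K*(K*P0^2 + 2*I X')"
  have c1: "c1 > 0" using K P0 Ige[of X'] by (simp add: c1_def add_pos_nonneg)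
  define \<beta> where "\<beta> = 1 + 2*K*(4 + B''/\<mu>)"
  have \<beta>: "\<beta> \<ge> 1" using K \<mu> by (simp add: \<beta>_def B''_def)
  define U where "U = max (X' + 1) (X + c1/\<mu>)"
  have UX: "U \<ge> X' + 1" "U \<ge> X + c1/\<mu>" by (auto simp: U_def)
  have Jlow: "J u \<ge> \<mu> * (u - X)" if "u \<ge> X" for u
  proof -
    have "integral {X..u} (\<lambda>x. \<mu>) \<le> J u"
      unfolding J_def by (rule integral_le[OF _ fint[OF X]]) (use f\<mu> in auto)
    then show ?thesis using that by (simp add: mult.commute)
  qed
  have main_le: "K*(K*P0^2 + 2*I u) \<le> \<beta> * J u" "J u \<ge> c1" if u: "u \<ge> U" for u
  proof -
    have "J u \<ge> \<mu> * (u - X)" using Jlow[of u] u UX by (auto simp: X'_def)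
    moreover have "\<mu> * (u - X) \<ge> c1"
    proof -
      have "u - X \<ge> c1/\<mu>" using u UX by simp
      then have "\<mu> * (u - X) \<ge> \<mu> * (c1/\<mu>)" using \<mu> by (intro mult_left_mono) auto
      then show ?thesis using \<mu> by simp
    qed
    ultimately show Jc: "J u \<ge> c1" by simp
    have "K*(K*P0^2 + 2*I u) \<le> K*(K*P0^2 + 2*(I X' + (4 + B''/\<mu>) * J u))"
      using JI[of u] u UX K by (intro mult_left_mono) auto
    also have "\<dots> = c1 + 2*K*(4 + B''/\<mu>) * J u" by (simp add: c1_def algebra_simps)
    also have "\<dots> \<le> \<beta> * J u" using Jc by (simp add: \<beta>_def algebra_simps)
    finally show "K*(K*P0^2 + 2*I u) \<le> \<beta> * J u" .
  qed
  define Fn where "Fn = (\<lambda>u. \<integral>\<^sup>+ s\<in>{0<..u}. ennreal (f s) \<partial>lborel)"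
  define ft where "ft = (\<lambda>x. f (max x (X/2)))"
  have ftc: "continuous_on UNIV ft"
    unfolding ft_def by (rule continuous_on_compose2[OF f_cont]) (use X in \<open>auto intro!: continuous_intros\<close>)
  have Fnge: "ennreal (J u) \<le> Fn u" if u: "u \<ge> X" for u
  proof -
    define Ff where "Ff = (\<lambda>x. integral {X/2..x} ft)"
    have "(\<integral>\<^sup>+x. ennreal (ft x) * indicator {X .. u} x \<partial>lborel) = Ff u - Ff X"
    proof (rule nn_integral_FTC_Icc)
      show "ft \<in> borel_measurable borel" by (rule borel_measurable_continuous_onI[OF ftc])
      fix x assume x: "x \<in> {X..u}"
      have "(Ff has_real_derivative ft x) (at x within {X/2..x+1})"
        unfolding Ff_def by (rule integral_has_real_derivative[OF continuous_on_subset[OF ftc]]) (use x X in auto)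
      then show "(Ff has_real_derivative ft x) (at x)"
        using at_within_Icc_at[of "X/2" x "x+1"] x X by auto
      show "0 \<le> ft x" using f_pos X by (simp add: ft_def less_imp_le)
    qed (use u in auto)
    moreover have "Ff u - Ff X = J u"
    proof -
      have "ft integrable_on {X/2..u}" by (rule integrable_continuous_interval, rule continuous_on_subset[OF ftc]) auto
      then have "Ff u = Ff X + integral {X..u} ft"
        unfolding Ff_def using Henstock_Kurzweil_Integration.integral_combine[of "X/2" X u ft] u X by simp
      moreover have "integral {X..u} ft = J u"
        unfolding J_def by (rule integral_cong) (use X in \<open>auto simp: ft_def\<close>)
      ultimately show ?thesis by simp
    qed
    moreover have "(\<integral>\<^sup>+x. ennreal (ft x) * indicator {X .. u} x \<partial>lborel) \<le> Fn u"
      unfolding Fn_def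
      by (rule nn_integral_mono) (use X in \<open>auto simp: ft_def indicator_def\<close>)
    ultimately show ?thesis by simp
  qed
  define h where "h = (\<lambda>u. ennreal (1 / sqrt (enn2real (Fn u))))"
  have hle: "h u \<le> ennreal (sqrt \<beta> * q u)" if u: "u \<ge> U" for u
  proof (cases "Fn u = \<infinity>")
    case True then show ?thesis by (simp add: h_def)
  next
    case False
    have uX: "u \<ge> X" using u UX by (auto simp: X'_def)
    have "enn2real (ennreal (J u)) \<le> enn2real (Fn u)"
      by (rule enn2real_mono[OF Fnge[OF uX]]) (use False in \<open>simp add: top.not_eq_extremum\<close>)
    moreover have "J u \<ge> 0" using main_le(2)[OF u] c1 by simp
    ultimately have FJ: "enn2real (Fn u) \<ge> J u" by simp
    have Jpos: "J u > 0" using main_le(2)[OF u] c1 by simp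
    have Kpos: "K*(K*P0^2 + 2*I u) > 0" using K P0 Ige[of u] by (simp add: add_pos_nonneg)
    have "K*(K*P0^2 + 2*I u) \<le> \<beta> * enn2real (Fn u)"
      using main_le(1)[OF u] mult_left_mono[OF FJ, of \<beta>] \<beta> by linarith
    then have "sqrt (K*(K*P0^2 + 2*I u)) \<le> sqrt \<beta> * sqrt (enn2real (Fn u))"
      by (subst real_sqrt_mult[symmetric]) (rule real_sqrt_le_mono)
    then have "1 / sqrt (enn2real (Fn u)) \<le> sqrt \<beta> * q u"
      using Kpos Jpos FJ \<beta> by (simp add: q_def field_simps)
    then show ?thesis by (simp add: h_def ennreal_leI)
  qed
  define Im where "Im = (\<lambda>v. integral {x0..max v x0} G)"
  have Imc: "continuous_on UNIV Im" unfolding Im_def by (rule cont_int_max[OF Gc])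
  have Imge: "Im v \<ge> 0" for v
    unfolding Im_def by (rule integral_nonneg[OF Gint]) (auto intro: less_imp_le Gp)
  define g where "g = (\<lambda>u. sqrt \<beta> * (1 / sqrt (K*(K*P0^2 + 2*Im (max u (U-1))))))"
  have gc: "continuous_on UNIV g"
  proof -
    have "continuous_on UNIV (\<lambda>u. Im (max u (U-1)))"
      by (rule continuous_on_compose2[OF Imc]) (auto intro!: continuous_intros)
    moreover have "K * (K * P0\<^sup>2 + 2 * Im v) \<noteq> 0" for v
      proof -
      have "K * P0^2 > 0" using K P0 by simp
      then show ?thesis using Imge[of v] K by simp
    qed
    ultimately show ?thesis unfolding g_def
      by (intro continuous_intros) simp_all
  qed
  have gq: "g u = sqrt \<beta> * q u" if "u \<ge> U - 1" for u
  proof -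
    have "u \<ge> x0" using that UX by (auto simp: X'_def)
    then show ?thesis using that by (simp add: g_def q_def Im_def I_def max_absorb1)
  qed
  have qint: "q integrable_on {x0..R}" for R
  proof -
    have nz: "K * P0\<^sup>2 + 2 * Im v \<noteq> 0" for v
      proof -
      have "K * P0^2 > 0" using K P0 by simp
      then show ?thesis using Imge[of v] by linarith
    qed
    have "continuous_on {x0..R} (\<lambda>u. 1 / sqrt (K*(K*P0^2 + 2*Im u)))" using K nz
      by (intro continuous_intros continuous_on_subset[OF Imc]) auto
    then have "(\<lambda>u. 1 / sqrt (K*(K*P0^2 + 2*Im u))) integrable_on {x0..R}"
      by (rule integrable_continuous_interval)
    then show ?thesis by (rule integrable_eq) (simp add: q_def Im_def I_def)
  qed
  have qnn: "q u \<ge> 0" for u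
  proof -
    have "K*(K*P0^2 + 2*I u) \<ge> 0" using K Ige[of u] by (intro mult_nonneg_nonneg add_nonneg_nonneg) auto
    then show ?thesis by (simp add: q_def)
  qed
  define Fr where "Fr = (\<lambda>R. integral {U-1..R} g)"
  have gint: "g integrable_on {a..b}" for a b
    by (rule integrable_continuous_interval, rule continuous_on_subset[OF gc]) auto
  have gnn: "g u \<ge> 0" for u
  proof -
    have "K*(K*P0^2 + 2*Im (max u (U-1))) \<ge> 0" using K Imge by (intro mult_nonneg_nonneg add_nonneg_nonneg) auto
    then show ?thesis using \<beta> by (simp add: g_def)
  qed
  have Frle: "Fr R \<le> sqrt \<beta> * L" if R: "R \<ge> U" for R
  proof -
    have "Fr R = integral {U-1..R} (\<lambda>u. sqrt \<beta> * q u)"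
      unfolding Fr_def by (rule integral_cong) (simp add: gq)
    also have "\<dots> = sqrt \<beta> * integral {U-1..R} q" by simp
    also have "\<dots> \<le> sqrt \<beta> * integral {x0..R} q"
    proof -
      have "integral {x0..R} q = integral {x0..U-1} q + integral {U-1..R} q"
        using Henstock_Kurzweil_Integration.integral_combine[OF _ _ qint[of R], of "U-1"] R UX by (simp add: X'_def)
      moreover have "integral {x0..U-1} q \<ge> 0" by (rule integral_nonneg[OF qint]) (simp add: qnn)
      ultimately show ?thesis using \<beta> by (intro mult_left_mono) auto
    qed
    also have "\<dots> \<le> sqrt \<beta> * L"
      using bndL[of R] R UX \<beta> by (intro mult_left_mono) (auto simp: q_def I_def X'_def)
    finally show ?thesis .
  qed
  have Frmono: "Fr R \<le> Fr R'" if "U \<le> R" "R \<le> R'" for R R'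
  proof -
    have "Fr R' = Fr R + integral {R..R'} g"
      unfolding Fr_def using Henstock_Kurzweil_Integration.integral_combine[OF _ _ gint, of "U-1" R R'] that by simp
    moreover have "integral {R..R'} g \<ge> 0" by (rule integral_nonneg[OF gint]) (simp add: gnn)
    ultimately show ?thesis by simp
  qed
  define T where "T = (SUP R\<in>{U..}. Fr R)"
  have bdd: "bdd_above (Fr ` {U..})" using Frle by (auto intro!: bdd_aboveI)
  have FrT: "(Fr \<longlongrightarrow> T) at_top"
  proof (rule increasing_tendsto)
    show "\<forall>\<^sub>F n in at_top. Fr n \<le> T"
      unfolding T_def eventually_at_top_linorder using bdd by (auto intro!: exI[of _ U] cSUP_upper)
    fix x assume "x < T"
    then obtain R0 where R0: "R0 \<in> {U..}" "x < Fr R0"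
      unfolding T_def using less_cSUP_iff[OF _ bdd] by auto
    then show "\<forall>\<^sub>F n in at_top. x < Fr n"
      unfolding eventually_at_top_linorder using Frmono by (auto intro!: exI[of _ R0] intro: less_le_trans)
  qed
  have nnfin: "(\<integral>\<^sup>+x. ennreal (g x) * indicator {U ..} x \<partial>lborel) = T - Fr U"
  proof (rule nn_integral_FTC_atLeast[OF borel_measurable_continuous_onI[OF gc] _ _ FrT])
    fix x assume x: "U \<le> x"
    have "(Fr has_real_derivative g x) (at x within {U-1..x+1})"
      unfolding Fr_def by (rule integral_has_real_derivative[OF continuous_on_subset[OF gc]]) (use x in auto)
    then show "(Fr has_real_derivative g x) (at x)"
      using at_within_Icc_at[of "U-1" x "x+1"] x by auto
    show "0 \<le> g x" by (rule gnn)
  qed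
  have "(\<integral>\<^sup>+ u\<in>{U<..}. h u \<partial>lborel) \<le> (\<integral>\<^sup>+x. ennreal (g x) * indicator {U ..} x \<partial>lborel)"
  proof (rule nn_integral_mono)
    fix u
    show "h u * indicator {U<..} u \<le> ennreal (g u) * indicator {U..} u"
    proof (cases "u > U")
      case True
      then have "h u \<le> ennreal (g u)" using hle[of u] gq[of u] by auto
      then show ?thesis using True by auto
    qed auto
  qed
  also have "\<dots> < \<infinity>" using nnfin by simp
  finally have "(\<integral>\<^sup>+ u\<in>{U<..}. h u \<partial>lborel) < \<infinity>" .
  moreover have "U > 0" using UX X by (auto simp: X'_def)
  ultimately show False using osgood unfolding h_def Fn_def by auto
qed


lemma osg_a:
  fixes f \<phi> :: "real \<Rightarrow> real"
  assumes f_cont: "continuous_on {0<..} f" and f_pos: "\<forall>x>0. f x > 0"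
    and \<phi>c: "continuous_on {0<..} \<phi>" and \<phi>m: "strict_mono_on {0<..} \<phi>"
    and \<phi>p: "\<forall>x>0. \<phi> x > 0" and lim: "((\<lambda>x. f x / \<phi> x) \<longlongrightarrow> 1) at_top"
    and m: "m > 0"
  obtains G X \<mu> B' where "continuous_on UNIV G" "mono G" "\<And>x. 0 < G x" "\<And>x. x \<ge> m \<Longrightarrow> f x \<le> G x"
    "X > 0" "\<mu> > 0" "\<And>x. x \<ge> X \<Longrightarrow> G x \<le> 4 * f x + B'" "\<And>x. x \<ge> X \<Longrightarrow> f x \<ge> \<mu>"
proof -
  have "\<forall>\<^sub>F x in at_top. f x / \<phi> x > 1/2" by (rule order_tendstoD(1)[OF lim]) simp
  moreover have "\<forall>\<^sub>F x in at_top. f x / \<phi> x < 3/2" by (rule order_tendstoD(2)[OF lim]) simp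
  ultimately have "\<forall>\<^sub>F x in at_top. f x / \<phi> x > 1/2 \<and> f x / \<phi> x < 3/2" by (rule eventually_conj)
  then obtain X1 where X1: "\<And>x. x \<ge> X1 \<Longrightarrow> f x / \<phi> x > 1/2 \<and> f x / \<phi> x < 3/2"
    unfolding eventually_at_top_linorder by blast
  define X where "X = max X1 (max m 1)"
  have X: "X > 0" "X \<ge> m" by (auto simp: X_def)
  have fphi: "\<phi> x < 2 * f x" "f x \<le> 2 * \<phi> x" if "x \<ge> X" for x
  proof -
    have px: "\<phi> x > 0" using \<phi>p X that by simp
    have "f x / \<phi> x > 1/2" "f x / \<phi> x < 3/2" using X1[of x] that by (auto simp: X_def)
    then show "\<phi> x < 2 * f x" "f x \<le> 2 * \<phi> x" using px by (auto simp: field_simps)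
  qed
  have \<phi>mono: "\<phi> x \<le> \<phi> y" if "0 < x" "x \<le> y" for x y
    using mono_onD[OF strict_mono_on_imp_mono_on[OF \<phi>m]] that by auto
  have "\<exists>x\<in>{m..X}. \<forall>y\<in>{m..X}. f y \<le> f x"
    by (rule continuous_attains_sup) (use X m in \<open>auto intro: continuous_on_subset[OF f_cont]\<close>)
  then obtain x1 where x1: "x1 \<in> {m..X}" "\<And>y. y \<in> {m..X} \<Longrightarrow> f y \<le> f x1" by blast
  define B where "B = f x1"
  have B: "B > 0" using x1 f_pos m by (auto simp: B_def)
  define G where "G = (\<lambda>x. 2 * \<phi> (max x m) + B)"
  show ?thesis
  proof
    show "continuous_on UNIV G" unfolding G_def
      by (intro continuous_intros continuous_on_compose2[OF \<phi>c]) (use m in auto)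
    show "mono G" unfolding G_def
    proof (rule monoI)
      fix x y :: real assume "x \<le> y"
      then have "\<phi> (max x m) \<le> \<phi> (max y m)" using \<phi>mono[of "max x m" "max y m"] m by auto
      then show "2 * \<phi> (max x m) + B \<le> 2 * \<phi> (max y m) + B" by simp
    qed
    have pm: "\<phi> (max x m) > 0" for x using \<phi>p m by (simp add: less_max_iff_disj)
    show "0 < G x" for x using pm[of x] B by (simp add: G_def)
    show "f x \<le> G x" if "x \<ge> m" for x
    proof (cases "x \<le> X")
      case True
      then have "f x \<le> B" using x1(2)[of x] that by (auto simp: B_def)
      then show ?thesis using pm[of x] by (simp add: G_def)
    next
      case False
      then show ?thesis using fphi[of x] that B by (simp add: G_def max_absorb1)
    qed
    show "X > 0" by (rule X)
    show "\<phi> X / 2 > 0" using \<phi>p X by auto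
    show "G x \<le> 4 * f x + B" if "x \<ge> X" for x
      using fphi[of x] that X by (simp add: G_def max_absorb1)
    show "f x \<ge> \<phi> X / 2" if "x \<ge> X" for x
      using fphi[of x] \<phi>mono[of X x] that X by simp
  qed
qed


lemma bound:
  fixes f :: "real \<Rightarrow> real"
  assumes f_cont: "continuous_on {0<..} f" and f_pos: "\<forall>x>0. f x > 0"
    and f_asymp: "asymp_increasing f"
    and osgood: "\<forall>\<eta>>0. (\<integral>\<^sup>+ u\<in>{\<eta><..}.
        ennreal (1 / sqrt (enn2real (\<integral>\<^sup>+ s\<in>{0<..u}. ennreal (f s) \<partial>lborel))) \<partial>lborel) = \<infinity>"
    and m: "m > 0" and K: "K > 0" and P0: "P0 > 0"
  obtains R where "\<And>a b z d t. a \<le> b \<Longrightarrow> b - a \<le> L \<Longrightarrow> continuous_on {a..b} z \<Longrightarrow>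
      (\<And>t. t \<in> {a..b} \<Longrightarrow> (z has_real_derivative d t) (at t within {a..b})) \<Longrightarrow>
      (\<And>t. t \<in> {a..b} \<Longrightarrow> d t \<le> K * (P0 + integral {a..t} (\<lambda>s. f (z s)))) \<Longrightarrow>
      z a \<le> x0 \<Longrightarrow> (\<And>t. t \<in> {a..b} \<Longrightarrow> z t \<ge> m) \<Longrightarrow> t \<in> {a..b} \<Longrightarrow> z t \<le> R"
proof -
  obtain \<phi> where \<phi>c: "continuous_on {0<..} \<phi>" and \<phi>m: "strict_mono_on {0<..} \<phi>"
    and \<phi>p: "\<forall>x>0. \<phi> x > 0" and lim: "((\<lambda>x. f x / \<phi> x) \<longlongrightarrow> 1) at_top"
    using f_asymp unfolding asymp_increasing_def by blast
  obtain G X \<mu> B' where Gc: "continuous_on UNIV G" and Gm: "mono G" and Gp: "\<And>x. 0 < G x"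
    and fG: "\<And>x. x \<ge> m \<Longrightarrow> f x \<le> G x" and X: "X > 0" and \<mu>: "\<mu> > 0"
    and GB: "\<And>x. x \<ge> X \<Longrightarrow> G x \<le> 4 * f x + B'" and f\<mu>: "\<And>x. x \<ge> X \<Longrightarrow> f x \<ge> \<mu>"
    using osg_a[OF f_cont f_pos \<phi>c \<phi>m \<phi>p lim m] by blast
  define q where "q = (\<lambda>u. 1 / sqrt (K*(K*P0^2 + 2*integral {x0..u} G)))"
  obtain R0 where R0: "R0 \<ge> x0" "integral {x0..R0} q > L"
    using osg_b[OF f_cont f_pos Gc Gp X \<mu> GB f\<mu> osgood K P0, of x0 L] unfolding q_def by blast
  have Gint: "G integrable_on {a..b}" for a b
    by (rule integrable_continuous_interval, rule continuous_on_subset[OF Gc]) auto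
  have Ige: "integral {x0..u} G \<ge> 0" for u
    by (rule integral_nonneg[OF Gint]) (auto intro: less_imp_le Gp)
  have inpos: "K*(K*P0^2 + 2*integral {x0..u} G) > 0" for u
  proof -
    have "K * P0^2 > 0" using K P0 by simp
    then show ?thesis using Ige[of u] K by (intro mult_pos_pos) auto
  qed
  have qint: "q integrable_on {x0..y}" for y
  proof -
    have "continuous_on {x0..y} (\<lambda>u. integral {x0..u} G)"
      by (rule indefinite_integral_continuous_1[OF Gint])
    then have "continuous_on {x0..y} (\<lambda>u. sqrt (K*(K*P0^2 + 2*integral {x0..u} G)))"
      by (intro continuous_intros)
    then have "continuous_on {x0..y} q" unfolding q_def
      by (rule continuous_on_divide[OF continuous_on_const]) (use inpos in \<open>metis less_irrefl mult_zero_left mult_zero_right real_sqrt_eq_zero_cancel_iff\<close>)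
    then show ?thesis by (rule integrable_continuous_interval)
  qed
  have qnn: "q u \<ge> 0" for u unfolding q_def using inpos[of u] by simp
  show ?thesis
  proof (rule that)
    fix a b z d t
    assume ab: "a \<le> b" and L: "b - a \<le> L" and zc: "continuous_on {a..b} z"
      and zd: "\<And>t. t \<in> {a..b} \<Longrightarrow> (z has_real_derivative d t) (at t within {a..b})"
      and dle: "\<And>t. t \<in> {a..b} \<Longrightarrow> d t \<le> K * (P0 + integral {a..t} (\<lambda>s. f (z s)))"
      and za: "z a \<le> x0" and zm: "\<And>t. t \<in> {a..b} \<Longrightarrow> z t \<ge> m" and t: "t \<in> {a..b}"
    have dle': "d s \<le> K * (P0 + integral {a..s} (\<lambda>s. G (z s)))" if s: "s \<in> {a..b}" for s
    proof -
      have zc': "continuous_on {a..s} z" using zc by (rule continuous_on_subset) (use s in auto)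
      have "continuous_on {a..s} (\<lambda>s. f (z s))"
        by (rule continuous_on_compose2[OF f_cont zc']) (use zm s m in \<open>force\<close>)
      moreover have "continuous_on {a..s} (\<lambda>s. G (z s))"
        by (rule continuous_on_compose2[OF Gc zc']) auto
      ultimately have "integral {a..s} (\<lambda>s. f (z s)) \<le> integral {a..s} (\<lambda>s. G (z s))"
        by (intro integral_le integrable_continuous_interval fG) (use zm s in auto)
      then have "K * (P0 + integral {a..s} (\<lambda>s. f (z s))) \<le> K * (P0 + integral {a..s} (\<lambda>s. G (z s)))"
        using K by (intro mult_left_mono) auto
      then show ?thesis using dle[OF s] by linarith
    qed
    obtain y where y: "y \<ge> max x0 (z t)" "integral {x0..y} q \<le> t - a"
      using apriori[OF Gc Gm Gp K P0 ab zc zd dle' za t] unfolding q_def by blast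
    show "z t \<le> R0"
    proof (rule ccontr)
      assume "\<not> z t \<le> R0"
      then have yR: "y \<ge> R0" using y by simp
      have "integral {x0..y} q = integral {x0..R0} q + integral {R0..y} q"
        using Henstock_Kurzweil_Integration.integral_combine[OF R0(1) yR qint] by simp
      moreover have "integral {R0..y} q \<ge> 0"
        by (rule integral_nonneg) (use qint[of y] R0 in \<open>auto intro: integrable_subinterval_real qnn\<close>)
      ultimately show False using R0 y L t by auto
    qed
  qed
qed


lemma int_refl_shift:
  fixes H :: "real \<Rightarrow> real"
  shows "integral {t-\<delta>..t} (\<lambda>s. H (t - s)) = integral {0..\<delta>} H"
proof -
  have "integral {(t-\<delta>)-t..t-t} (\<lambda>x. (\<lambda>s. H (t - s)) (x + t)) = integral {t-\<delta>..t} (\<lambda>s. H (t - s))"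
    by (rule integral_shift_real_ivl)
  moreover have "integral {(t-\<delta>)-t..t-t} (\<lambda>x. (\<lambda>s. H (t - s)) (x + t)) = integral {-\<delta>..-0} (\<lambda>x. H (-x))"
    by simp
  moreover have "integral {-\<delta>..-0} (\<lambda>x. H (-x)) = integral {0..\<delta>} H"
    by (rule Henstock_Kurzweil_Integration.integral_reflect_real)
  ultimately show ?thesis by simp
qed

lemma conv_cont:
  fixes k F :: "real \<Rightarrow> real"
  assumes kc: "continuous_on {0..\<delta>} k" and Fc: "continuous_on T F"
    and sub: "\<And>s \<rho>. s \<in> S \<Longrightarrow> \<rho> \<in> {0..\<delta>} \<Longrightarrow> s - \<rho> - h \<in> T"
  shows "continuous_on S (\<lambda>s. integral {0..\<delta>} (\<lambda>\<rho>. k \<rho> * F (s - \<rho> - h)))"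
proof -
  have c1: "continuous_on (S \<times> {0..\<delta>}) (\<lambda>x. k (snd x))"
    by (rule continuous_on_compose2[OF kc continuous_on_snd]) auto
  have c2: "continuous_on (S \<times> {0..\<delta>}) (\<lambda>x. F (fst x - snd x - h))"
    by (rule continuous_on_compose2[OF Fc]) (auto intro!: continuous_intros simp: sub)
  have "continuous_on (S \<times> cbox 0 \<delta>) (\<lambda>(s,\<rho>). k \<rho> * F (s - \<rho> - h))"
    using continuous_on_mult[OF c1 c2] by (simp add: split_beta)
  from integral_continuous_on_param[OF this] show ?thesis by simp
qed


definition ghh :: "(real \<Rightarrow> real) \<Rightarrow> (real \<Rightarrow> real) \<Rightarrow> real \<Rightarrow> real \<Rightarrow> (real \<Rightarrow> real) \<Rightarrow> real \<Rightarrow> real" where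
  "ghh k f \<delta> h u s = integral {0..\<delta>} (\<lambda>\<rho>. k \<rho> * f (u (s - \<rho> - h)))"

lemma ghh_cong:
  assumes "\<And>\<rho>. \<rho> \<in> {0..\<delta>} \<Longrightarrow> u (s - \<rho> - h) = v (s - \<rho> - h)"
  shows "ghh k f \<delta> h u s = ghh k f \<delta> h v s"
  unfolding ghh_def by (rule integral_cong) (simp add: assms)

lemma ghh_nonneg:
  fixes k f u :: "real \<Rightarrow> real"
  assumes kc: "continuous_on {0..\<delta>} k" and knn: "\<forall>\<rho>\<in>{0..\<delta>}. k \<rho> \<ge> 0"
    and f_cont: "continuous_on {0<..} f" and f_pos: "\<forall>x>0. f x > 0"
    and uc: "continuous_on T u" and upos: "\<And>r. r \<in> T \<Longrightarrow> u r > 0"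
    and sub: "\<And>\<rho>. \<rho> \<in> {0..\<delta>} \<Longrightarrow> s - \<rho> - h \<in> T"
  shows "ghh k f \<delta> h u s \<ge> 0"
proof -
  have Fc: "continuous_on T (\<lambda>r. f (u r))"
    by (rule continuous_on_compose2[OF f_cont uc]) (use upos in auto)
  have "continuous_on {s} (\<lambda>s. integral {0..\<delta>} (\<lambda>\<rho>. k \<rho> * f (u (s - \<rho> - h))))"
    by simp
  have "continuous_on {0..\<delta>} (\<lambda>\<rho>. k \<rho> * f (u (s - \<rho> - h)))"
    by (intro continuous_intros kc continuous_on_compose2[OF Fc]) (auto simp: sub)
  moreover have "0 \<le> k x * f (u (s - x - h))" if "x \<in> {0..\<delta>}" for x
  proof -
    have "f (u (s - x - h)) > 0" using f_pos upos[OF sub[OF that]] by simp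
    then show ?thesis using knn that by simp
  qed
  ultimately show ?thesis unfolding ghh_def
    by (intro integral_nonneg integrable_continuous_interval) auto
qed

lemma step_construct:
  fixes k f \<phi>e :: "real \<Rightarrow> real"
  assumes kc: "continuous_on {0..\<delta>} k" and knn: "\<forall>\<rho>\<in>{0..\<delta>}. k \<rho> \<ge> 0"
    and f_cont: "continuous_on {0<..} f" and f_pos: "\<forall>x>0. f x > 0"
    and m: "m > 0" and h: "h > 0" and D: "D \<le> a - \<delta> - h" and \<delta>: "\<delta> > 0"
    and \<phi>c: "continuous_on {D..a} \<phi>e" and \<phi>m: "\<forall>r\<in>{D..a}. \<phi>e r \<ge> m"
  shows "\<exists>u. continuous_on {D..a + real j * h} u \<and> (\<forall>r\<in>{D..a}. u r = \<phi>e r) \<and>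
     (\<forall>t\<in>{a..a + real j * h}. u t = \<phi>e a + integral {a..t} (ghh k f \<delta> h u)) \<and>
     (\<forall>r\<in>{D..a + real j * h}. u r \<ge> m)"
proof (induction j)
  case 0
  show ?case by (rule exI[of _ \<phi>e]) (use \<phi>c \<phi>m in auto)
next
  case (Suc j)
  define c where "c = a + real j * h"
  have c': "a + real (Suc j) * h = c + h" by (simp add: c_def algebra_simps)
  have ac: "a \<le> c" using h by (simp add: c_def)
  obtain u where uc: "continuous_on {D..c} u" and uh: "\<forall>r\<in>{D..a}. u r = \<phi>e r"
    and ueq: "\<forall>t\<in>{a..c}. u t = \<phi>e a + integral {a..t} (ghh k f \<delta> h u)"
    and um: "\<forall>r\<in>{D..c}. u r \<ge> m"
    using Suc.IH unfolding c_def by blast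
  have upos: "u r > 0" if "r \<in> {D..c}" for r using um that m by force
  define gu where "gu = ghh k f \<delta> h u"
  have Fc: "continuous_on {D..c} (\<lambda>r. f (u r))"
    by (rule continuous_on_compose2[OF f_cont uc]) (use upos in auto)
  have gc: "continuous_on {a..c+h} gu"
    unfolding gu_def ghh_def
    by (rule conv_cont[OF kc Fc]) (use D \<delta> h in auto)
  have gnn: "gu s \<ge> 0" if "s \<in> {a..c+h}" for s
    unfolding gu_def by (rule ghh_nonneg[OF kc knn f_cont f_pos uc upos]) (use that D h in auto)
  have gint: "gu integrable_on {x..y}" if "a \<le> x" "y \<le> c + h" for x y
    by (rule integrable_continuous_interval, rule continuous_on_subset[OF gc]) (use that in auto)
  define u' where "u' = (\<lambda>t. if t \<le> c then u t else u c + integral {c..t} gu)"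
  have gu': "ghh k f \<delta> h u' s = gu s" if "s \<in> {a..c+h}" for s
    unfolding gu_def by (rule ghh_cong) (use that \<delta> in \<open>auto simp: u'_def\<close>)
  have intu': "integral {a..t} (ghh k f \<delta> h u') = integral {a..t} gu" if "t \<le> c + h" for t
    by (rule integral_cong) (use that gu' in auto)
  show ?case
  proof (intro exI[of _ u'] conjI ballI)
    have "continuous_on ({D..c} \<union> {c..c+h}) u'"
    proof (rule continuous_on_closed_Un)
      show "continuous_on {D..c} u'" by (rule continuous_on_eq[OF uc]) (auto simp: u'_def)
      have "continuous_on {c..c+h} (\<lambda>t. u c + integral {c..t} gu)"
        by (intro continuous_intros indefinite_integral_continuous_1 gint) (use ac in auto)
      then show "continuous_on {c..c+h} u'" by (rule continuous_on_eq) (auto simp: u'_def)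
    qed auto
    moreover have "{D..c} \<union> {c..c+h} = {D..c+h}" using D ac h \<delta> by auto
    ultimately show "continuous_on {D..a + real (Suc j) * h} u'" unfolding c' by simp
  next
    fix r assume "r \<in> {D..a}" then show "u' r = \<phi>e r" using uh ac by (auto simp: u'_def)
  next
    fix t assume t: "t \<in> {a..a + real (Suc j) * h}"
    show "u' t = \<phi>e a + integral {a..t} (ghh k f \<delta> h u')"
    proof (cases "t \<le> c")
      case True
      have "integral {a..t} (ghh k f \<delta> h u) = integral {a..t} gu" by (simp add: gu_def)
      then show ?thesis using ueq True t intu'[of t] h by (auto simp: u'_def c')
    next
      case False
      have "integral {a..c} gu + integral {c..t} gu = integral {a..t} gu"
        by (rule Henstock_Kurzweil_Integration.integral_combine) (use False ac t c' in \<open>auto intro!: gint\<close>)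
      moreover have "u c = \<phi>e a + integral {a..c} gu" using ueq ac by (auto simp: gu_def)
      ultimately show ?thesis using False intu'[of t] t c' by (auto simp: u'_def)
    qed
  next
    fix r assume r: "r \<in> {D..a + real (Suc j) * h}"
    show "m \<le> u' r"
    proof (cases "r \<le> c")
      case True then show ?thesis using um r by (auto simp: u'_def)
    next
      case False
      have "integral {c..r} gu \<ge> 0"
        by (rule integral_nonneg) (use False r c' ac gnn in \<open>auto intro!: gint\<close>)
      moreover have "u c \<ge> m" using um ac D h \<delta> by auto
      ultimately show ?thesis using False by (simp add: u'_def)
    qed
  qed
qed


lemma int_deriv:
  fixes g u :: "real \<Rightarrow> real"
  assumes gc: "continuous_on {a..b} g" and ueq: "\<And>t. t \<in> {a..b} \<Longrightarrow> u t = c + integral {a..t} g"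
    and t: "t \<in> {a..b}"
  shows "(u has_real_derivative g t) (at t within {a..b})"
proof -
  have "((\<lambda>x. c + integral {a..x} g) has_real_derivative (0 + g t)) (at t within {a..b})"
    by (intro DERIV_add DERIV_const integral_has_real_derivative gc t)
  then have "((\<lambda>x. c + integral {a..x} g) has_real_derivative g t) (at t within {a..b})" by simp
  then show ?thesis
    by (rule has_field_derivative_transform_within[where d=1]) (use t ueq in auto)
qed

lemma integral_mono_interval:
  fixes F :: "real \<Rightarrow> real"
  assumes Fc: "continuous_on {D..t} F" and Fnn: "\<And>x. x \<in> {D..t} \<Longrightarrow> F x \<ge> 0"
    and le: "D \<le> x" "x \<le> y" "y \<le> t"
  shows "integral {x..y} F \<le> integral {D..t} F"
proof -
  have int: "F integrable_on {D..t}" by (rule integrable_continuous_interval[OF Fc])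
  have "integral {D..t} F = integral {D..y} F + integral {y..t} F"
    using Henstock_Kurzweil_Integration.integral_combine[OF _ _ int, of y] le by simp
  moreover have "integral {D..y} F = integral {D..x} F + integral {x..y} F"
    using Henstock_Kurzweil_Integration.integral_combine[OF _ _ integrable_subinterval_real[OF int], of D x y] le by simp
  moreover have "integral {D..x} F \<ge> 0"
    by (rule integral_nonneg[OF integrable_subinterval_real[OF int]]) (use le Fnn in auto)
  moreover have "integral {y..t} F \<ge> 0"
    by (rule integral_nonneg[OF integrable_subinterval_real[OF int]]) (use le Fnn in auto)
  ultimately show ?thesis by simp
qed

lemma kernel_bound:
  fixes k F :: "real \<Rightarrow> real"
  assumes kc: "continuous_on {0..\<delta>} k" and knn: "\<forall>\<rho>\<in>{0..\<delta>}. k \<rho> \<ge> 0"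
    and kK: "\<forall>\<rho>\<in>{0..\<delta>}. k \<rho> \<le> K"
    and Fc: "continuous_on {D..t} F" and Fnn: "\<And>x. x \<in> {D..t} \<Longrightarrow> F x \<ge> 0"
    and h: "h \<ge> 0" and D: "D \<le> t - h - \<delta>" and \<delta>: "\<delta> > 0"
  shows "integral {0..\<delta>} (\<lambda>\<rho>. k \<rho> * F (t - \<rho> - h)) \<le> K * integral {D..t} F"
proof -
  have Fc2: "continuous_on {0..\<delta>} (\<lambda>\<rho>. F (t - \<rho> - h))"
    by (rule continuous_on_compose2[OF Fc]) (use D h in \<open>auto intro!: continuous_intros\<close>)
  have "integral {0..\<delta>} (\<lambda>\<rho>. k \<rho> * F (t - \<rho> - h)) \<le> integral {0..\<delta>} (\<lambda>\<rho>. K * F (t - \<rho> - h))"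
  proof (rule integral_le)
    show "(\<lambda>\<rho>. k \<rho> * F (t - \<rho> - h)) integrable_on {0..\<delta>}"
      by (intro integrable_continuous_interval continuous_intros kc Fc2)
    show "(\<lambda>\<rho>. K * F (t - \<rho> - h)) integrable_on {0..\<delta>}"
      by (intro integrable_continuous_interval continuous_intros Fc2)
    fix \<rho> assume r: "\<rho> \<in> {0..\<delta>}"
    have "F (t - \<rho> - h) \<ge> 0" using Fnn r D h by auto
    then show "k \<rho> * F (t - \<rho> - h) \<le> K * F (t - \<rho> - h)"
      using kK r by (intro mult_right_mono) auto
  qed
  also have "\<dots> = K * integral {0..\<delta>} (\<lambda>\<rho>. F (t - h - \<rho>))" by (simp add: algebra_simps)
  also have "integral {0..\<delta>} (\<lambda>\<rho>. F (t - h - \<rho>)) = integral {(t-h)-\<delta>..t-h} (\<lambda>s. F (t - h - ((t-h) - s)))"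
    by (rule int_refl_shift[symmetric])
  also have "\<dots> = integral {(t-h)-\<delta>..t-h} F" by simp
  also have "\<dots> \<le> integral {D..t} F"
    by (rule integral_mono_interval[OF Fc Fnn]) (use D h \<delta> in auto)
  finally show ?thesis
    using knn kK \<delta> by (smt (verit, best) atLeastAtMost_iff mult_left_mono)
qed

lemma lip_int:
  fixes g u :: "real \<Rightarrow> real"
  assumes gc: "continuous_on {a..b} g" and ueq: "\<And>t. t \<in> {a..b} \<Longrightarrow> u t = c + integral {a..t} g"
    and gb: "\<And>s. s \<in> {a..b} \<Longrightarrow> \<bar>g s\<bar> \<le> \<Lambda>"
    and st: "s \<in> {a..b}" "t \<in> {a..b}"
  shows "\<bar>u t - u s\<bar> \<le> \<Lambda> * \<bar>t - s\<bar>"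
proof -
  have gi: "g integrable_on {x..y}" if "a \<le> x" "y \<le> b" for x y
    by (rule integrable_continuous_interval, rule continuous_on_subset[OF gc]) (use that in auto)
  have *: "\<bar>u y - u x\<bar> \<le> \<Lambda> * (y - x)" if xy: "x \<in> {a..b}" "y \<in> {a..b}" "x \<le> y" for x y
  proof -
    have "integral {a..x} g + integral {x..y} g = integral {a..y} g"
      by (rule Henstock_Kurzweil_Integration.integral_combine) (use xy in \<open>auto intro!: gi\<close>)
    then have "u y - u x = integral {x..y} g" using ueq xy by simp
    moreover have "norm (integral {x..y} g) \<le> integral {x..y} (\<lambda>_. \<Lambda>)"
      by (rule integral_norm_bound_integral) (use xy gb in \<open>auto intro!: gi\<close>)
    ultimately show ?thesis using xy by (simp add: mult.commute)
  qed
  show ?thesis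
  proof (cases "s \<le> t")
    case True then show ?thesis using *[OF st True] by simp
  next
    case False then show ?thesis using *[OF st(2,1)] by (simp add: abs_minus_commute)
  qed
qed


lemma local_exist:
  fixes k f \<phi> :: "real \<Rightarrow> real"
  assumes kc: "continuous_on {0..\<delta>} k" and knn: "\<forall>\<rho>\<in>{0..\<delta>}. k \<rho> \<ge> 0" and \<delta>: "\<delta> > 0"
    and f_cont: "continuous_on {0<..} f" and f_pos: "\<forall>x>0. f x > 0"
    and f_asymp: "asymp_increasing f"
    and osgood: "\<forall>\<eta>>0. (\<integral>\<^sup>+ u\<in>{\<eta><..}.
        ennreal (1 / sqrt (enn2real (\<integral>\<^sup>+ s\<in>{0<..u}. ennreal (f s) \<partial>lborel))) \<partial>lborel) = \<infinity>"
    and L: "L > 0"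
    and \<phi>c: "continuous_on {a-\<delta>..a} \<phi>" and \<phi>p: "\<forall>t\<in>{a-\<delta>..a}. \<phi> t > 0"
  shows "\<exists>z. continuous_on {a-\<delta>..a+L} z \<and> (\<forall>t\<in>{a-\<delta>..a+L}. z t > 0) \<and> (\<forall>t\<in>{a-\<delta>..a}. z t = \<phi> t) \<and>
    (\<forall>t\<in>{a..a+L}. z t = \<phi> a + integral {a..t} (ghh k f \<delta> 0 z))"
proof -
  define D where "D = a - \<delta> - L"
  define \<phi>e where "\<phi>e = (\<lambda>r. \<phi> (max r (a - \<delta>)))"
  have \<phi>ec: "continuous_on {D..a} \<phi>e"
    unfolding \<phi>e_def by (rule continuous_on_compose2[OF \<phi>c]) (use \<delta> in \<open>auto intro!: continuous_intros\<close>)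
  have \<phi>ea: "\<phi>e a = \<phi> a" using \<delta> by (simp add: \<phi>e_def)
  have \<phi>eq: "\<phi>e r = \<phi> r" if "r \<in> {a-\<delta>..a}" for r using that by (simp add: \<phi>e_def)
  obtain m where m: "m > 0" "\<And>r. r \<in> {a-\<delta>..a} \<Longrightarrow> \<phi> r \<ge> m"
  proof -
    have "\<exists>x\<in>{a-\<delta>..a}. \<forall>y\<in>{a-\<delta>..a}. \<phi> x \<le> \<phi> y"
      by (rule continuous_attains_inf[OF compact_Icc _ \<phi>c]) (use \<delta> in auto)
    then obtain x where "x \<in> {a-\<delta>..a}" "\<And>y. y \<in> {a-\<delta>..a} \<Longrightarrow> \<phi> x \<le> \<phi> y" by blast
    then show ?thesis using that[of "\<phi> x"] \<phi>p by auto
  qed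
  obtain M where M: "\<And>r. r \<in> {a-\<delta>..a} \<Longrightarrow> \<phi> r \<le> M"
  proof -
    have "\<exists>x\<in>{a-\<delta>..a}. \<forall>y\<in>{a-\<delta>..a}. \<phi> y \<le> \<phi> x"
      by (rule continuous_attains_sup[OF compact_Icc _ \<phi>c]) (use \<delta> in auto)
    then show ?thesis using that by blast
  qed
  have \<phi>em: "\<phi>e r \<ge> m" "\<phi>e r \<le> M" if "r \<in> {D..a}" for r
    using m(2)[of "max r (a-\<delta>)"] M[of "max r (a-\<delta>)"] that \<delta> by (auto simp: \<phi>e_def D_def)
  have mM: "m \<le> M" using \<phi>em[of a] \<delta> L by (auto simp: D_def)
  define h where "h = (\<lambda>n::nat. L / real (Suc n))"
  have h: "h n > 0" "h n \<le> L" for n using L by (auto simp: h_def field_simps)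
  have hL: "real (Suc n) * h n = L" for n by (simp add: h_def)
  define P where "P = (\<lambda>n u. continuous_on {D..a + L} u \<and> (\<forall>r\<in>{D..a}. u r = \<phi>e r) \<and>
     (\<forall>t\<in>{a..a + L}. u t = \<phi>e a + integral {a..t} (ghh k f \<delta> (h n) u)) \<and>
     (\<forall>r\<in>{D..a + L}. u r \<ge> m))"
  have "\<forall>n. \<exists>u. P n u"
  proof
    fix n
    have "D \<le> a - \<delta> - h n" using h[of n] by (simp add: D_def)
    from step_construct[OF kc knn f_cont f_pos m(1) h(1) this \<delta> \<phi>ec, of "Suc n"] \<phi>em
    show "\<exists>u. P n u" unfolding P_def hL by auto
  qed
  then obtain U where U: "\<And>n. P n (U n)" by metis
  have Uc: "continuous_on {D..a+L} (U n)" and Uh: "\<And>r. r \<in> {D..a} \<Longrightarrow> U n r = \<phi>e r"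
    and Ueq: "\<And>t. t \<in> {a..a+L} \<Longrightarrow> U n t = \<phi>e a + integral {a..t} (ghh k f \<delta> (h n) (U n))"
    and Um: "\<And>r. r \<in> {D..a+L} \<Longrightarrow> U n r \<ge> m" for n
    using U[of n] unfolding P_def by auto
  have Upos: "U n r > 0" if "r \<in> {D..a+L}" for n r using less_le_trans[OF m(1) Um[OF that]] by simp
  have FUc: "continuous_on {D..a+L} (\<lambda>r. f (U n r))" for n
    by (rule continuous_on_compose2[OF f_cont Uc]) (use Upos in auto)
  have gUc: "continuous_on {a..a+L} (ghh k f \<delta> (h n) (U n))" for n
    unfolding ghh_def by (rule conv_cont[OF kc FUc]) (use h[of n] \<delta> in \<open>auto simp: D_def\<close>)
  obtain Kmax where Kmax: "\<And>\<rho>. \<rho> \<in> {0..\<delta>} \<Longrightarrow> k \<rho> \<le> Kmax"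
  proof -
    have "\<exists>x\<in>{0..\<delta>}. \<forall>y\<in>{0..\<delta>}. k y \<le> k x"
      by (rule continuous_attains_sup[OF compact_Icc _ kc]) (use \<delta> in auto)
    then show ?thesis using that by blast
  qed
  define K where "K = max Kmax 0 + 1"
  have K: "K > 0" "\<forall>\<rho>\<in>{0..\<delta>}. k \<rho> \<le> K"
  proof -
    show "K > 0" by (simp add: K_def)
    have "Kmax \<le> max Kmax 0" by simp
    then show "\<forall>\<rho>\<in>{0..\<delta>}. k \<rho> \<le> K" using Kmax unfolding K_def by force
  qed
  have fmax: "\<exists>B>0. \<forall>y\<in>{m..X}. f y \<le> B" if "m \<le> X" for X
  proof -
    have "\<exists>x\<in>{m..X}. \<forall>y\<in>{m..X}. f y \<le> f x"
      by (rule continuous_attains_sup[OF compact_Icc _ continuous_on_subset[OF f_cont]]) (use that m in auto)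
    then obtain x where "x \<in> {m..X}" "\<forall>y\<in>{m..X}. f y \<le> f x" by blast
    then show ?thesis using f_pos m by (intro exI[of _ "f x"]) auto
  qed
  obtain FH where FH: "FH > 0" "\<And>y. y \<in> {m..M} \<Longrightarrow> f y \<le> FH" using fmax[OF mM] by blast
  define P0 where "P0 = (\<delta> + L) * FH + 1"
  have P0: "P0 > 0" using \<delta> L FH by (simp add: P0_def add_pos_pos)
  obtain R where R: "\<And>a' b z d t. a' \<le> b \<Longrightarrow> b - a' \<le> L \<Longrightarrow> continuous_on {a'..b} z \<Longrightarrow>
      (\<And>t. t \<in> {a'..b} \<Longrightarrow> (z has_real_derivative d t) (at t within {a'..b})) \<Longrightarrow>
      (\<And>t. t \<in> {a'..b} \<Longrightarrow> d t \<le> K * (P0 + integral {a'..t} (\<lambda>s. f (z s)))) \<Longrightarrow>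
      z a' \<le> \<phi> a \<Longrightarrow> (\<And>t. t \<in> {a'..b} \<Longrightarrow> z t \<ge> m) \<Longrightarrow> t \<in> {a'..b} \<Longrightarrow> z t \<le> R"
  proof (rule bound[OF f_cont f_pos f_asymp osgood m(1) K(1) P0, of L "\<phi> a"])
    fix R assume "\<And>a' b z d t. a' \<le> b \<Longrightarrow> b - a' \<le> L \<Longrightarrow> continuous_on {a'..b} z \<Longrightarrow>
      (\<And>t. t \<in> {a'..b} \<Longrightarrow> (z has_real_derivative d t) (at t within {a'..b})) \<Longrightarrow>
      (\<And>t. t \<in> {a'..b} \<Longrightarrow> d t \<le> K * (P0 + integral {a'..t} (\<lambda>s. f (z s)))) \<Longrightarrow>
      z a' \<le> \<phi> a \<Longrightarrow> (\<And>t. t \<in> {a'..b} \<Longrightarrow> z t \<ge> m) \<Longrightarrow> t \<in> {a'..b} \<Longrightarrow> z t \<le> R"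
    then show thesis by (rule that)
  qed
  have UR: "U n t \<le> R" if t: "t \<in> {a..a+L}" for n t
  proof (rule R[of a "a+L" "U n" "ghh k f \<delta> (h n) (U n)"])
    show "continuous_on {a..a+L} (U n)" by (rule continuous_on_subset[OF Uc]) (use \<delta> L in \<open>auto simp: D_def\<close>)
    fix s assume s: "s \<in> {a..a+L}"
    show "(U n has_real_derivative ghh k f \<delta> (h n) (U n) s) (at s within {a..a+L})"
      by (rule int_deriv[OF gUc Ueq s])
    have Fnn: "\<And>x. x \<in> {D..s} \<Longrightarrow> 0 \<le> f (U n x)" using Upos f_pos s by (auto intro: less_imp_le)
    have Fc': "continuous_on {D..s} (\<lambda>r. f (U n r))" by (rule continuous_on_subset[OF FUc]) (use s in auto)
    have "ghh k f \<delta> (h n) (U n) s \<le> K * integral {D..s} (\<lambda>r. f (U n r))"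
      unfolding ghh_def
      by (rule kernel_bound[OF kc knn K(2) Fc' Fnn]) (use h[of n] \<delta> s in \<open>auto simp: D_def less_imp_le\<close>)
    moreover have "integral {D..s} (\<lambda>r. f (U n r)) = integral {D..a} (\<lambda>r. f (U n r)) + integral {a..s} (\<lambda>r. f (U n r))"
      using Henstock_Kurzweil_Integration.integral_combine[OF _ _ integrable_continuous_interval[OF Fc'], of a] s \<delta> L
      by (simp add: D_def)
    moreover have "integral {D..a} (\<lambda>r. f (U n r)) \<le> integral {D..a} (\<lambda>r. FH)"
    proof (rule integral_le)
      show "(\<lambda>r. f (U n r)) integrable_on {D..a}"
        by (rule integrable_continuous_interval, rule continuous_on_subset[OF FUc]) (use L in auto)
      fix r assume r: "r \<in> {D..a}"
      show "f (U n r) \<le> FH" using Uh[OF r] \<phi>em[OF r] FH(2) by auto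
    qed auto
    moreover have "integral {D..a} (\<lambda>r. FH) = (\<delta> + L) * FH"
    proof -
      have "D \<le> a" using \<delta> L by (simp add: D_def)
      then have "integral {D..a} (\<lambda>r. FH) = (a - D) * FH" by simp
      then show ?thesis by (simp add: D_def)
    qed
    ultimately have "integral {D..s} (\<lambda>r. f (U n r)) \<le> P0 + integral {a..s} (\<lambda>r. f (U n r))"
      unfolding P0_def by linarith
    then have "K * integral {D..s} (\<lambda>r. f (U n r)) \<le> K * (P0 + integral {a..s} (\<lambda>r. f (U n r)))"
      using K(1) by (intro mult_left_mono) auto
    with \<open>ghh k f \<delta> (h n) (U n) s \<le> _\<close>
    show "ghh k f \<delta> (h n) (U n) s \<le> K * (P0 + integral {a..s} (\<lambda>s. f (U n s)))" by simp
    show "m \<le> U n s" using Um[of s n] s \<delta> L by (auto simp: D_def)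
  qed (use t L Ueq[of a n] \<phi>ea in auto)
  define R' where "R' = max R M"
  have UR': "U n r \<le> R'" "U n r \<ge> m" if "r \<in> {D..a+L}" for n r
  proof -
    show "U n r \<ge> m" by (rule Um[OF that])
    show "U n r \<le> R'"
    proof (cases "r \<le> a")
      case True then show ?thesis using Uh[of r n] \<phi>em[of r] that by (auto simp: R'_def)
    next
      case False then show ?thesis using UR[of r n] that by (auto simp: R'_def)
    qed
  qed
  have mR': "m \<le> R'" using mM by (simp add: R'_def)
  obtain FB where FB: "FB > 0" "\<And>y. y \<in> {m..R'} \<Longrightarrow> f y \<le> FB" using fmax[OF mR'] by blast
  define \<Lambda> where "\<Lambda> = K * \<delta> * FB"
  have gb: "\<bar>ghh k f \<delta> (h n) (U n) s\<bar> \<le> \<Lambda>" if s: "s \<in> {a..a+L}" for n s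
  proof -
    have sub: "s - \<rho> - h n \<in> {D..a+L}" if "\<rho> \<in> {0..\<delta>}" for \<rho> using that s h[of n] by (auto simp: D_def)
    have nn: "ghh k f \<delta> (h n) (U n) s \<ge> 0"
      by (rule ghh_nonneg[OF kc knn f_cont f_pos Uc Upos]) (use sub in auto)
    have "ghh k f \<delta> (h n) (U n) s \<le> integral {0..\<delta>} (\<lambda>\<rho>. K * FB)"
      unfolding ghh_def
    proof (rule integral_le)
      show "(\<lambda>\<rho>. k \<rho> * f (U n (s - \<rho> - h n))) integrable_on {0..\<delta>}"
        by (intro integrable_continuous_interval continuous_intros kc continuous_on_compose2[OF FUc])
           (use sub in auto)
      fix \<rho> assume r: "\<rho> \<in> {0..\<delta>}"
      have "f (U n (s - \<rho> - h n)) \<le> FB" using FB(2) UR'[OF sub[OF r]] by auto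
      moreover have "f (U n (s - \<rho> - h n)) \<ge> 0" using f_pos Upos[OF sub[OF r]] by (simp add: less_imp_le)
      ultimately show "k \<rho> * f (U n (s - \<rho> - h n)) \<le> K * FB"
        using K knn r FB by (intro mult_mono) auto
    qed auto
    then show ?thesis using nn \<delta> by (simp add: \<Lambda>_def mult.commute mult.left_commute)
  qed
  have Lip: "\<bar>U n t - U n s\<bar> \<le> \<Lambda> * \<bar>t - s\<bar>" if "s \<in> {a..a+L}" "t \<in> {a..a+L}" for n s t
    by (rule lip_int[OF gUc Ueq gb that])
  have \<Lambda>nn: "\<Lambda> \<ge> 0" using K \<delta> FB by (simp add: \<Lambda>_def)
  obtain g0 r where g0c: "continuous_on {a..a+L} g0" and r: "strict_mono (r :: nat \<Rightarrow> nat)"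
    and g0conv: "\<And>e. 0 < e \<Longrightarrow> \<exists>N. \<forall>n x. n \<ge> N \<and> x \<in> {a..a+L} \<longrightarrow> norm (U (r n) x - g0 x) < e"
  proof (rule Arzela_Ascoli[of "{a..a+L}" U R'])
    show "compact {a..a+L}" by simp
    fix n x assume x: "x \<in> {a..a+L}"
    then have "x \<in> {D..a+L}" using \<delta> L by (auto simp: D_def)
    then show "norm (U n x) \<le> R'" using UR'[of x n] Upos[of x n] by simp
  next
    fix x e assume x: "x \<in> {a..a+L}" and e: "(0::real) < e"
    show "\<exists>d>0. \<forall>n y. y \<in> {a..a+L} \<and> norm (x - y) < d \<longrightarrow> norm (U n x - U n y) < e"
    proof (intro exI[of _ "e / (\<Lambda> + 1)"] conjI allI impI)
      show "e / (\<Lambda> + 1) > 0" using e \<Lambda>nn by simp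
      fix n y assume y: "y \<in> {a..a+L} \<and> norm (x - y) < e / (\<Lambda> + 1)"
      have "\<bar>U n x - U n y\<bar> \<le> \<Lambda> * \<bar>x - y\<bar>" using Lip[of y x n] x y by simp
      also have "\<dots> \<le> \<Lambda> * (e / (\<Lambda> + 1))" using y \<Lambda>nn by (intro mult_left_mono) auto
      also have "\<dots> < e" using e \<Lambda>nn by (simp add: field_simps)
      finally show "norm (U n x - U n y) < e" by simp
    qed
  qed (rule that, assumption+)
  have Ua: "U n a = \<phi> a" for n using Ueq[of a n] \<phi>ea L by simp
  have g0a: "g0 a = \<phi> a"
  proof (rule ccontr)
    assume ne: "g0 a \<noteq> \<phi> a"
    obtain N where "\<forall>n x. n \<ge> N \<and> x \<in> {a..a+L} \<longrightarrow> norm (U (r n) x - g0 x) < \<bar>g0 a - \<phi> a\<bar>"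
      using g0conv[of "\<bar>g0 a - \<phi> a\<bar>"] ne by auto
    then have "norm (U (r N) a - g0 a) < \<bar>g0 a - \<phi> a\<bar>" using L by auto
    then show False using Ua by simp
  qed
  define z where "z = (\<lambda>x. if x \<le> a then \<phi>e x else g0 x)"
  have conv: "\<exists>N. \<forall>n\<ge>N. \<forall>x\<in>{D..a+L}. \<bar>U (r n) x - z x\<bar> < e" if e: "e > 0" for e
  proof -
    obtain N where N: "\<forall>n x. n \<ge> N \<and> x \<in> {a..a+L} \<longrightarrow> norm (U (r n) x - g0 x) < e"
      using g0conv[OF e] by blast
    show ?thesis
    proof (intro exI[of _ N] allI impI ballI)
      fix n x assume n: "n \<ge> N" and x: "x \<in> {D..a+L}"
      show "\<bar>U (r n) x - z x\<bar> < e"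
      proof (cases "x \<le> a")
        case True then show ?thesis using Uh[of x "r n"] x e by (simp add: z_def)
      next
        case False then show ?thesis using N n x by (auto simp: z_def)
      qed
    qed
  qed
  have zlim: "(\<lambda>n. U (r n) x) \<longlonglongrightarrow> z x" if x: "x \<in> {D..a+L}" for x
  proof (rule LIMSEQ_I)
    fix e :: real assume "e > 0"
    then obtain N where "\<forall>n\<ge>N. \<forall>x\<in>{D..a+L}. \<bar>U (r n) x - z x\<bar> < e" using conv by blast
    then show "\<exists>no. \<forall>n\<ge>no. norm (U (r n) x - z x) < e" using x by (intro exI[of _ N]) auto
  qed
  have zb: "z x \<ge> m" "z x \<le> R'" if x: "x \<in> {D..a+L}" for x
  proof -
    show "z x \<ge> m" by (rule LIMSEQ_le_const[OF zlim[OF x]]) (use UR' x in auto)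
    show "z x \<le> R'" by (rule LIMSEQ_le_const2[OF zlim[OF x]]) (use UR' x in auto)
  qed
  have zpos: "z x > 0" if "x \<in> {D..a+L}" for x using zb[OF that] m by simp
  have zc: "continuous_on {D..a+L} z"
  proof -
    have "continuous_on ({D..a} \<union> {a..a+L}) z"
    proof (rule continuous_on_closed_Un)
      show "continuous_on {D..a} z" by (rule continuous_on_eq[OF \<phi>ec]) (auto simp: z_def)
      show "continuous_on {a..a+L} z" by (rule continuous_on_eq[OF g0c]) (auto simp: z_def g0a \<phi>ea)
    qed auto
    moreover have "{D..a} \<union> {a..a+L} = {D..a+L}" using \<delta> L by (auto simp: D_def)
    ultimately show ?thesis by simp
  qed
  have Fzc: "continuous_on {D..a+L} (\<lambda>r. f (z r))"
    by (rule continuous_on_compose2[OF f_cont zc]) (use zpos in auto)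
  define Gz where "Gz = ghh k f \<delta> 0 z"
  have Gzc: "continuous_on {a..a+L} Gz"
    unfolding Gz_def ghh_def by (rule conv_cont[OF kc Fzc]) (use \<delta> L in \<open>auto simp: D_def\<close>)
  have ucz: "\<exists>d>0. \<forall>x\<in>{D..a+L}. \<forall>x'\<in>{D..a+L}. dist x' x < d \<longrightarrow> dist (f (z x')) (f (z x)) < e"
    if "e > 0" for e
    using compact_uniformly_continuous[OF Fzc compact_Icc] that unfolding uniformly_continuous_on_def by blast
  have fc': "continuous_on {m..R'} f" by (rule continuous_on_subset[OF f_cont]) (use m in auto)
  have ucf: "\<exists>d>0. \<forall>x\<in>{m..R'}. \<forall>x'\<in>{m..R'}. dist x' x < d \<longrightarrow> dist (f x') (f x) < e"
    if "e > 0" for e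
    using compact_uniformly_continuous[OF fc' compact_Icc] that unfolding uniformly_continuous_on_def by blast
  have UC2: "\<exists>N. \<forall>n\<ge>N. \<forall>s\<in>{a..a+L}. \<forall>\<rho>\<in>{0..\<delta>}.
      \<bar>f (U (r n) (s - \<rho> - h (r n))) - f (z (s - \<rho> - 0))\<bar> < e" if e: "e > 0" for e
  proof -
    obtain \<theta> where \<theta>: "\<theta> > 0" "\<And>x x'. x\<in>{D..a+L} \<Longrightarrow> x'\<in>{D..a+L} \<Longrightarrow> dist x' x < \<theta> \<Longrightarrow> dist (f (z x')) (f (z x)) < e/2"
      using ucz[of "e/2"] e by auto
    obtain \<eta> where \<eta>: "\<eta> > 0" "\<And>x x'. x\<in>{m..R'} \<Longrightarrow> x'\<in>{m..R'} \<Longrightarrow> dist x' x < \<eta> \<Longrightarrow> dist (f x') (f x) < e/2"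
      using ucf[of "e/2"] e by auto
    obtain N1 where N1: "\<forall>n\<ge>N1. \<forall>x\<in>{D..a+L}. \<bar>U (r n) x - z x\<bar> < \<eta>" using conv[OF \<eta>(1)] by blast
    obtain N2 :: nat where N2: "L / \<theta> < real N2" using reals_Archimedean2 by blast
    have N2pos: "real N2 > 0" using N2 L \<theta> by (smt (verit) divide_pos_pos)
    show ?thesis
    proof (intro exI[of _ "max N1 N2"] allI impI ballI)
      fix n s \<rho> assume n: "n \<ge> max N1 N2" and s: "s \<in> {a..a+L}" and \<rho>: "\<rho> \<in> {0..\<delta>}"
      have rn: "r n \<ge> n" using seq_suble[OF r] by auto
      have "h (r n) < \<theta>"
      proof -
        have "real N2 < real (Suc (r n))" using rn n by simp
        then have "L / real (Suc (r n)) < L / real N2" using L N2pos by (intro divide_strict_left_mono) auto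
        also have "L / real N2 < \<theta>" using N2 \<theta> N2pos by (simp add: field_simps)
        finally show ?thesis by (simp add: h_def)
      qed
      define x where "x = s - \<rho>"
      define x' where "x' = s - \<rho> - h (r n)"
      have x: "x \<in> {D..a+L}" "x' \<in> {D..a+L}" using s \<rho> h[of "r n"] by (auto simp: x_def x'_def D_def)
      have d1: "\<bar>f (z x') - f (z x)\<bar> < e/2"
        using \<theta>(2)[OF x(1) x(2)] \<open>h (r n) < \<theta>\<close> h[of "r n"] by (simp add: dist_real_def x_def x'_def)
      have "\<bar>U (r n) x' - z x'\<bar> < \<eta>" using N1 n x by auto
      then have d2: "\<bar>f (U (r n) x') - f (z x')\<bar> < e/2"
        using \<eta>(2)[of "z x'" "U (r n) x'"] zb[OF x(2)] UR'[OF x(2)] by (simp add: dist_real_def)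
      show "\<bar>f (U (r n) (s - \<rho> - h (r n))) - f (z (s - \<rho> - 0))\<bar> < e"
        using d1 d2 unfolding x_def x'_def by (simp add: abs_if split: if_splits)
    qed
  qed
  have UC3: "\<exists>N. \<forall>n\<ge>N. \<forall>s\<in>{a..a+L}. \<bar>ghh k f \<delta> (h (r n)) (U (r n)) s - Gz s\<bar> \<le> K * \<delta> * e"
    if e: "e > 0" for e
  proof -
    obtain N where N: "\<forall>n\<ge>N. \<forall>s\<in>{a..a+L}. \<forall>\<rho>\<in>{0..\<delta>}.
      \<bar>f (U (r n) (s - \<rho> - h (r n))) - f (z (s - \<rho> - 0))\<bar> < e" using UC2[OF e] by blast
    show ?thesis
    proof (intro exI[of _ N] allI impI ballI)
      fix n s assume n: "n \<ge> N" and s: "s \<in> {a..a+L}"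
      have i1: "(\<lambda>\<rho>. k \<rho> * f (U (r n) (s - \<rho> - h (r n)))) integrable_on {0..\<delta>}"
        by (intro integrable_continuous_interval continuous_intros kc continuous_on_compose2[OF FUc])
           (use s h[of "r n"] in \<open>auto simp: D_def\<close>)
      have i2: "(\<lambda>\<rho>. k \<rho> * f (z (s - \<rho> - 0))) integrable_on {0..\<delta>}"
        by (intro integrable_continuous_interval continuous_intros kc continuous_on_compose2[OF Fzc])
           (use s in \<open>auto simp: D_def\<close>)
      have "ghh k f \<delta> (h (r n)) (U (r n)) s - Gz s =
          integral {0..\<delta>} (\<lambda>\<rho>. k \<rho> * f (U (r n) (s - \<rho> - h (r n))) - k \<rho> * f (z (s - \<rho> - 0)))"
        unfolding Gz_def ghh_def by (rule integral_diff[OF i1 i2, symmetric])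
      also have "\<bar>\<dots>\<bar> \<le> integral {0..\<delta>} (\<lambda>\<rho>. K * e)"
      proof -
        have "norm (integral {0..\<delta>} (\<lambda>\<rho>. k \<rho> * f (U (r n) (s - \<rho> - h (r n))) - k \<rho> * f (z (s - \<rho>))))
          \<le> integral {0..\<delta>} (\<lambda>\<rho>. K * e)"
        proof (rule integral_norm_bound_integral)
          show "(\<lambda>\<rho>. k \<rho> * f (U (r n) (s - \<rho> - h (r n))) - k \<rho> * f (z (s - \<rho>))) integrable_on {0..\<delta>}"
            using integrable_diff[OF i1 i2] by simp
          fix \<rho> assume r: "\<rho> \<in> {0..\<delta>}"
          have "\<bar>k \<rho> * f (U (r n) (s - \<rho> - h (r n))) - k \<rho> * f (z (s - \<rho>))\<bar>
              = \<bar>k \<rho>\<bar> * \<bar>f (U (r n) (s - \<rho> - h (r n))) - f (z (s - \<rho>))\<bar>"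
            by (simp add: abs_mult[symmetric] algebra_simps)
          also have "\<dots> \<le> K * e"
            using N n s r knn K by (intro mult_mono) (auto intro: less_imp_le)
          finally show "norm (k \<rho> * f (U (r n) (s - \<rho> - h (r n))) - k \<rho> * f (z (s - \<rho>))) \<le> K * e" by simp
        qed auto
        then show ?thesis by simp
      qed
      also have "\<dots> = K * \<delta> * e" using \<delta> by simp
      finally show "\<bar>ghh k f \<delta> (h (r n)) (U (r n)) s - Gz s\<bar> \<le> K * \<delta> * e" .
    qed
  qed
  have zeq: "z t = \<phi> a + integral {a..t} Gz" if t: "t \<in> {a..a+L}" for t
  proof -
    have tD: "t \<in> {D..a+L}" using t \<delta> L by (auto simp: D_def)
    have "(\<lambda>n. U (r n) t) \<longlonglongrightarrow> \<phi> a + integral {a..t} Gz"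
    proof (rule LIMSEQ_I)
      fix \<epsilon> :: real assume \<epsilon>: "\<epsilon> > 0"
      define e where "e = \<epsilon> / (2 * (K * \<delta> * L + 1))"
      have KdL: "K * \<delta> * L \<ge> 0" using K \<delta> L by simp
      have e: "e > 0" using \<epsilon> KdL by (simp add: e_def)
      obtain N where N: "\<forall>n\<ge>N. \<forall>s\<in>{a..a+L}. \<bar>ghh k f \<delta> (h (r n)) (U (r n)) s - Gz s\<bar> \<le> K * \<delta> * e"
        using UC3[OF e] by blast
      show "\<exists>no. \<forall>n\<ge>no. norm (U (r n) t - (\<phi> a + integral {a..t} Gz)) < \<epsilon>"
      proof (intro exI[of _ N] allI impI)
        fix n assume n: "n \<ge> N"
        have gi: "ghh k f \<delta> (h (r n)) (U (r n)) integrable_on {a..t}"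
          by (rule integrable_continuous_interval, rule continuous_on_subset[OF gUc]) (use t in auto)
        have Gi: "Gz integrable_on {a..t}"
          by (rule integrable_continuous_interval, rule continuous_on_subset[OF Gzc]) (use t in auto)
        have "U (r n) t - (\<phi> a + integral {a..t} Gz) = integral {a..t} (\<lambda>s. ghh k f \<delta> (h (r n)) (U (r n)) s - Gz s)"
          using Ueq[OF t, of "r n"] \<phi>ea integral_diff[OF gi Gi] by simp
        also have "norm \<dots> \<le> integral {a..t} (\<lambda>s. K * \<delta> * e)"
          by (rule integral_norm_bound_integral) (use integrable_diff[OF gi Gi] N n t in auto)
        also have "\<dots> = (t - a) * (K * \<delta> * e)" using t by simp
        also have "\<dots> \<le> L * (K * \<delta> * e)" using t K \<delta> e by (intro mult_right_mono) auto
        also have "\<dots> = (K * \<delta> * L) * e" by simp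
        also have "\<dots> < (K * \<delta> * L + 1) * e" using e by (simp add: algebra_simps)
        also have "\<dots> = \<epsilon> / 2" using KdL by (simp add: e_def field_simps)
        also have "\<dots> < \<epsilon>" using \<epsilon> by simp
        finally show "norm (U (r n) t - (\<phi> a + integral {a..t} Gz)) < \<epsilon>" .
      qed
    qed
    from LIMSEQ_unique[OF zlim[OF tD] this] show ?thesis .
  qed
  show ?thesis
  proof (intro exI[of _ z] conjI ballI)
    show "continuous_on {a-\<delta>..a+L} z" by (rule continuous_on_subset[OF zc]) (use L in \<open>auto simp: D_def\<close>)
    fix t assume "t \<in> {a-\<delta>..a+L}" then show "z t > 0" using zpos L by (auto simp: D_def)
  next
    fix t assume "t \<in> {a-\<delta>..a}" then show "z t = \<phi> t" by (simp add: z_def \<phi>eq)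
  next
    fix t assume "t \<in> {a..a+L}" then show "z t = \<phi> a + integral {a..t} (ghh k f \<delta> 0 z)"
      using zeq by (simp add: Gz_def)
  qed
qed


definition gk :: "(real \<Rightarrow> real) \<Rightarrow> (real \<Rightarrow> real) \<Rightarrow> real \<Rightarrow> (real \<Rightarrow> real) \<Rightarrow> real \<Rightarrow> real" where
  "gk k f \<delta> z t = integral {t-\<delta>..t} (\<lambda>s. k (t - s) * f (z s))"

definition solI :: "(real \<Rightarrow> real) \<Rightarrow> (real \<Rightarrow> real) \<Rightarrow> real \<Rightarrow> real \<Rightarrow> (real \<Rightarrow> real) \<Rightarrow> real \<Rightarrow> (real \<Rightarrow> real) \<Rightarrow> bool" where
  "solI k f \<delta> a \<phi> b z \<longleftrightarrow> continuous_on {a-\<delta>..b} z \<and> (\<forall>t\<in>{a-\<delta>..b}. 0 < z t) \<and>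
     (\<forall>t\<in>{a-\<delta>..a}. z t = \<phi> t) \<and>
     (\<forall>t\<in>{a..b}. (z has_real_derivative gk k f \<delta> z t) (at t within {a..b}))"

lemma gk_cong:
  assumes "\<And>s. s \<in> {t-\<delta>..t} \<Longrightarrow> z s = w s"
  shows "gk k f \<delta> z t = gk k f \<delta> w t"
  unfolding gk_def by (rule integral_cong) (simp add: assms)

lemma ghh_gk: "ghh k f \<delta> 0 z t = gk k f \<delta> z t"
proof -
  have "integral {t-\<delta>..t} (\<lambda>s. (\<lambda>\<rho>. k \<rho> * f (z (t - \<rho>))) (t - s)) = integral {0..\<delta>} (\<lambda>\<rho>. k \<rho> * f (z (t - \<rho>)))"
    by (rule int_refl_shift)
  then show ?thesis by (simp add: ghh_def gk_def)
qed

lemma local_sol: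
  fixes k f \<phi> :: "real \<Rightarrow> real"
  assumes kc: "continuous_on {0..\<delta>} k" and knn: "\<forall>\<rho>\<in>{0..\<delta>}. k \<rho> \<ge> 0" and \<delta>: "\<delta> > 0"
    and f_cont: "continuous_on {0<..} f" and f_pos: "\<forall>x>0. f x > 0"
    and f_asymp: "asymp_increasing f"
    and osgood: "\<forall>\<eta>>0. (\<integral>\<^sup>+ u\<in>{\<eta><..}.
        ennreal (1 / sqrt (enn2real (\<integral>\<^sup>+ s\<in>{0<..u}. ennreal (f s) \<partial>lborel))) \<partial>lborel) = \<infinity>"
    and L: "L > 0"
    and \<phi>c: "continuous_on {a-\<delta>..a} \<phi>" and \<phi>p: "\<forall>t\<in>{a-\<delta>..a}. \<phi> t > 0"
  shows "\<exists>z. solI k f \<delta> a \<phi> (a+L) z"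
proof -
  obtain z where zc: "continuous_on {a-\<delta>..a+L} z" and zp: "\<forall>t\<in>{a-\<delta>..a+L}. z t > 0"
    and zh: "\<forall>t\<in>{a-\<delta>..a}. z t = \<phi> t"
    and zeq: "\<forall>t\<in>{a..a+L}. z t = \<phi> a + integral {a..t} (ghh k f \<delta> 0 z)"
    using local_exist[OF kc knn \<delta> f_cont f_pos f_asymp osgood L \<phi>c \<phi>p] by blast
  have Fc: "continuous_on {a-\<delta>..a+L} (\<lambda>r. f (z r))"
    by (rule continuous_on_compose2[OF f_cont zc]) (use zp in auto)
  have gc: "continuous_on {a..a+L} (ghh k f \<delta> 0 z)"
    unfolding ghh_def by (rule conv_cont[OF kc Fc]) auto
  show ?thesis unfolding solI_def
  proof (intro exI[of _ z] conjI ballI)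
    fix t assume t: "t \<in> {a..a+L}"
    from int_deriv[OF gc _ t, of z "\<phi> a"] zeq
    show "(z has_real_derivative gk k f \<delta> z t) (at t within {a..a+L})" by (simp add: ghh_gk)
  qed (use zc zp zh in auto)
qed

lemma deriv_Un:
  fixes f :: "real \<Rightarrow> real"
  assumes "(f has_real_derivative D) (at x within S)" "(f has_real_derivative D) (at x within T)"
  shows "(f has_real_derivative D) (at x within (S \<union> T))"
  using assms unfolding has_field_derivative_iff by (simp add: Lim_within_Un)

lemma glue:
  assumes ab: "a \<le> b" and bc: "b \<le> c" and \<delta>: "\<delta> > 0"
    and s1: "solI k f \<delta> a \<phi> b z1" and s2: "solI k f \<delta> b z1 c z2"
  shows "solI k f \<delta> a \<phi> c (\<lambda>t. if t \<le> b then z1 t else z2 t)"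
proof -
  define z where "z = (\<lambda>t. if t \<le> b then z1 t else z2 t)"
  from s1 have c1: "continuous_on {a-\<delta>..b} z1" and p1: "\<forall>t\<in>{a-\<delta>..b}. 0 < z1 t"
    and h1: "\<forall>t\<in>{a-\<delta>..a}. z1 t = \<phi> t"
    and d1: "\<forall>t\<in>{a..b}. (z1 has_real_derivative gk k f \<delta> z1 t) (at t within {a..b})"
    unfolding solI_def by auto
  from s2 have c2: "continuous_on {b-\<delta>..c} z2" and p2: "\<forall>t\<in>{b-\<delta>..c}. 0 < z2 t"
    and h2: "\<forall>t\<in>{b-\<delta>..b}. z2 t = z1 t"
    and d2: "\<forall>t\<in>{b..c}. (z2 has_real_derivative gk k f \<delta> z2 t) (at t within {b..c})"
    unfolding solI_def by auto
  have gk1: "gk k f \<delta> z t = gk k f \<delta> z1 t" if "t \<le> b" for t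
    by (rule gk_cong) (use that in \<open>auto simp: z_def\<close>)
  have gk2: "gk k f \<delta> z t = gk k f \<delta> z2 t" if "t \<ge> b" for t
    by (rule gk_cong) (use that h2 in \<open>auto simp: z_def\<close>)
  have "continuous_on ({a-\<delta>..b} \<union> {b..c}) z"
  proof (rule continuous_on_closed_Un)
    show "continuous_on {a-\<delta>..b} z" by (rule continuous_on_eq[OF c1]) (auto simp: z_def)
    have "continuous_on {b..c} z2" by (rule continuous_on_subset[OF c2]) (use \<delta> in auto)
    then show "continuous_on {b..c} z" by (rule continuous_on_eq) (use h2 \<delta> in \<open>auto simp: z_def\<close>)
  qed auto
  moreover have "{a-\<delta>..b} \<union> {b..c} = {a-\<delta>..c}" using ab bc \<delta> by auto
  ultimately have zc: "continuous_on {a-\<delta>..c} z" by simp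
  have zd: "(z has_real_derivative gk k f \<delta> z t) (at t within {a..c})" if t: "t \<in> {a..c}" for t
  proof -
    have L: "(z has_real_derivative gk k f \<delta> z t) (at t within {a..b})" if tb: "t \<le> b"
    proof -
      have "(z1 has_real_derivative gk k f \<delta> z1 t) (at t within {a..b})" using d1 t tb by auto
      then show ?thesis unfolding gk1[OF tb]
        by (rule has_field_derivative_transform_within[where d=1]) (use t tb in \<open>auto simp: z_def\<close>)
    qed
    have R: "(z has_real_derivative gk k f \<delta> z t) (at t within {b..c})" if tb: "t \<ge> b"
    proof -
      have "(z2 has_real_derivative gk k f \<delta> z2 t) (at t within {b..c})" using d2 t tb by auto
      then show ?thesis unfolding gk2[OF tb]
        by (rule has_field_derivative_transform_within[where d=1]) (use t tb h2 \<delta> in \<open>auto simp: z_def\<close>)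
    qed
    consider "t < b" | "t = b" | "t > b" by linarith
    then show ?thesis
    proof cases
      case 1
      have "at t within {a..c} = at t within {a..b}"
        by (rule at_within_nhd[where S="{..<b}"]) (use 1 bc in auto)
      then show ?thesis using L 1 by simp
    next
      case 2
      have "{a..c} = {a..b} \<union> {b..c}" using ab bc by auto
      then show ?thesis using deriv_Un[OF L R] 2 by simp
    next
      case 3
      have "at t within {a..c} = at t within {b..c}"
        by (rule at_within_nhd[where S="{b<..}"]) (use 3 ab in auto)
      then show ?thesis using R 3 by simp
    qed
  qed
  show ?thesis unfolding solI_def z_def[symmetric]
  proof (intro conjI ballI)
    show "continuous_on {a-\<delta>..c} z" by (rule zc)
    fix t assume t: "t \<in> {a-\<delta>..c}" show "0 < z t"
      using p1 p2 t \<delta> by (auto simp: z_def)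
  next
    fix t assume t: "t \<in> {a-\<delta>..a}" show "z t = \<phi> t" using h1 t ab by (auto simp: z_def)
  qed (rule zd)
qed


lemma global_sol:
  fixes k f \<phi> :: "real \<Rightarrow> real"
  assumes kc: "continuous_on {0..\<delta>} k" and knn: "\<forall>\<rho>\<in>{0..\<delta>}. k \<rho> \<ge> 0" and \<delta>: "\<delta> > 0"
    and f_cont: "continuous_on {0<..} f" and f_pos: "\<forall>x>0. f x > 0"
    and f_asymp: "asymp_increasing f"
    and osgood: "\<forall>\<eta>>0. (\<integral>\<^sup>+ u\<in>{\<eta><..}.
        ennreal (1 / sqrt (enn2real (\<integral>\<^sup>+ s\<in>{0<..u}. ennreal (f s) \<partial>lborel))) \<partial>lborel) = \<infinity>"
    and \<phi>c: "continuous_on {a-\<delta>..a} \<phi>" and \<phi>p: "\<forall>t\<in>{a-\<delta>..a}. \<phi> t > 0"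
  shows "\<exists>z. continuous_on {a-\<delta>..} z \<and> (\<forall>t\<in>{a-\<delta>..}. 0 < z t) \<and> (\<forall>t\<in>{a-\<delta>..a}. z t = \<phi> t) \<and>
    (\<forall>t\<in>{a..}. (z has_real_derivative gk k f \<delta> z t) (at t within {a..}))"
proof -
  note ls = local_sol[OF kc knn \<delta> f_cont f_pos f_asymp osgood]
  define P where "P = (\<lambda>n::nat. solI k f \<delta> a \<phi> (a + real n + 1))"
  define Q where "Q = (\<lambda>n::nat. \<lambda>z z' :: real \<Rightarrow> real. \<forall>t\<in>{a-\<delta>..a + real n + 1}. z' t = z t)"
  have "\<exists>Z. \<forall>n. P n (Z n) \<and> Q n (Z n) (Z (Suc n))"
  proof (rule dependent_nat_choice)
    show "\<exists>x. P 0 x" unfolding P_def using ls[of 1 a \<phi>] \<phi>c \<phi>p by simp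
  next
    fix z n assume Pz: "P n z"
    define b where "b = a + real n + 1"
    have s1: "solI k f \<delta> a \<phi> b z" using Pz by (simp add: P_def b_def)
    have ab: "a \<le> b" by (simp add: b_def)
    have zc: "continuous_on {b-\<delta>..b} z"
      using s1 ab unfolding solI_def by (auto intro: continuous_on_subset)
    have zp: "\<forall>t\<in>{b-\<delta>..b}. z t > 0" using s1 ab unfolding solI_def by auto
    obtain z2 where s2: "solI k f \<delta> b z (b+1) z2" using ls[of 1 b z, OF _ zc zp] by auto
    have "solI k f \<delta> a \<phi> (b+1) (\<lambda>t. if t \<le> b then z t else z2 t)"
      by (rule glue[OF ab _ \<delta> s1 s2]) simp
    moreover have "b + 1 = a + real (Suc n) + 1" by (simp add: b_def)
    ultimately show "\<exists>y. P (Suc n) y \<and> Q n z y" unfolding P_def Q_def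
      by (intro exI[of _ "\<lambda>t. if t \<le> b then z t else z2 t"]) (auto simp: b_def)
  qed
  then obtain Z where PZ: "\<And>n. P n (Z n)" and QZ: "\<And>n. Q n (Z n) (Z (Suc n))" by blast
  have agree: "Z m t = Z n t" if "n \<le> m" "t \<in> {a-\<delta>..a + real n + 1}" for n m t
    using that(1)
  proof (induction m rule: dec_induct)
    case (step m)
    have "Z (Suc m) t = Z m t" using QZ[of m] that step by (auto simp: Q_def)
    then show ?case using step by simp
  qed simp
  define idx where "idx = (\<lambda>t. nat \<lceil>t - a\<rceil>)"
  have idx: "t < a + real (idx t) + 1" for t
    using real_nat_ceiling_ge[of "t - a"] by (simp add: idx_def)
  define z where "z = (\<lambda>t. Z (idx t) t)"
  have zZ: "z t = Z n t" if "t \<in> {a-\<delta>..a + real n + 1}" for n t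
  proof -
    have "Z (max n (idx t)) t = Z n t" by (rule agree) (use that in auto)
    moreover have "Z (max n (idx t)) t = Z (idx t) t" by (rule agree) (use that idx[of t] in auto)
    ultimately show ?thesis by (simp add: z_def)
  qed
  have sZ: "continuous_on {a-\<delta>..a + real n + 1} (Z n)" "\<forall>t\<in>{a-\<delta>..a + real n + 1}. 0 < Z n t"
    "\<forall>t\<in>{a-\<delta>..a}. Z n t = \<phi> t"
    "\<forall>t\<in>{a..a + real n + 1}. (Z n has_real_derivative gk k f \<delta> (Z n) t) (at t within {a..a + real n + 1})"
    for n using PZ[of n] unfolding P_def solI_def by auto
  show ?thesis
  proof (intro exI[of _ z] conjI ballI)
    show "continuous_on {a-\<delta>..} z"
    proof (clarsimp simp: continuous_on_eq_continuous_within)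
      fix t assume t: "a - \<delta> \<le> t"
      define n where "n = idx t"
      have tn: "t < a + real n + 1" using idx by (simp add: n_def)
      have "continuous (at t within {a-\<delta>..a + real n + 1}) (Z n)"
        using sZ(1)[of n] t tn by (simp add: continuous_on_eq_continuous_within)
      moreover have "at t within {a-\<delta>..a + real n + 1} = at t within {a-\<delta>..}"
        by (rule at_within_nhd[where S="{..<a + real n + 1}"]) (use tn in auto)
      ultimately have "continuous (at t within {a-\<delta>..}) (Z n)" by simp
      then show "continuous (at t within {a-\<delta>..}) z"
        by (rule continuous_transform_within[where \<delta>="a + real n + 1 - t"])
           (use tn t zZ[of _ n] in \<open>auto simp: dist_real_def\<close>)
    qed
  next
    fix t assume t: "t \<in> {a-\<delta>..}"
    show "0 < z t" using sZ(2)[of "idx t"] t idx[of t] by (simp add: z_def)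
  next
    fix t assume t: "t \<in> {a-\<delta>..a}"
    show "z t = \<phi> t" using sZ(3)[of "idx t"] t by (simp add: z_def)
  next
    fix t assume t: "t \<in> {a..}"
    define n where "n = idx t"
    have tn: "t < a + real n + 1" using idx by (simp add: n_def)
    have gkeq: "gk k f \<delta> (Z n) t = gk k f \<delta> z t"
      by (rule gk_cong) (use t tn zZ[of _ n] in auto)
    have "(Z n has_real_derivative gk k f \<delta> (Z n) t) (at t within {a..a + real n + 1})"
      using sZ(4)[of n] t tn by auto
    moreover have "at t within {a..a + real n + 1} = at t within {a..}"
      by (rule at_within_nhd[where S="{..<a + real n + 1}"]) (use tn in auto)
    ultimately have "(Z n has_real_derivative gk k f \<delta> z t) (at t within {a..})" by (simp add: gkeq)
    then show "(z has_real_derivative gk k f \<delta> z t) (at t within {a..})"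
      by (rule has_field_derivative_transform_within[where d="a + real n + 1 - t"])
         (use tn t zZ[of _ n] \<delta> in \<open>auto simp: dist_real_def\<close>)
  qed
qed


lemma sol_of_all:
  assumes all: "\<And>c. c \<ge> b0 \<Longrightarrow> solI k f \<delta> a \<phi> c z"
  shows "continuous_on {a-\<delta>..} z \<and> (\<forall>t\<in>{a-\<delta>..}. 0 < z t) \<and> (\<forall>t\<in>{a-\<delta>..a}. z t = \<phi> t) \<and>
    (\<forall>t\<in>{a..}. (z has_real_derivative gk k f \<delta> z t) (at t within {a..}))"
proof (intro conjI ballI)
  define cc where "cc = (\<lambda>t::real. max b0 (max a t) + 1)"
  have cc: "cc t \<ge> b0" "t < cc t" "a < cc t" for t by (auto simp: cc_def)
  show "continuous_on {a-\<delta>..} z"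
  proof (clarsimp simp: continuous_on_eq_continuous_within)
    fix t assume t: "a - \<delta> \<le> t"
    have "continuous_on {a-\<delta>..cc t} z" using all[OF cc(1)] unfolding solI_def by auto
    then have "continuous (at t within {a-\<delta>..cc t}) z"
      using t cc(2)[of t] by (simp add: continuous_on_eq_continuous_within)
    moreover have "at t within {a-\<delta>..cc t} = at t within {a-\<delta>..}"
      by (rule at_within_nhd[where S="{..<cc t}"]) (use cc(2)[of t] in auto)
    ultimately show "continuous (at t within {a-\<delta>..}) z" by simp
  qed
  fix t assume t: "t \<in> {a-\<delta>..}"
  show "0 < z t" using all[OF cc(1)[of t]] t cc(2)[of t] unfolding solI_def by auto
next
  fix t assume t: "t \<in> {a-\<delta>..a}"
  show "z t = \<phi> t" using all[OF order.refl] t unfolding solI_def by auto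
next
  fix t assume t: "t \<in> {a..}"
  define c where "c = max b0 (max a t) + 1"
  have c: "c \<ge> b0" "t < c" by (auto simp: c_def)
  have "(z has_real_derivative gk k f \<delta> z t) (at t within {a..c})"
    using all[OF c(1)] t c unfolding solI_def by auto
  moreover have "at t within {a..c} = at t within {a..}"
    by (rule at_within_nhd[where S="{..<c}"]) (use c in auto)
  ultimately show "(z has_real_derivative gk k f \<delta> z t) (at t within {a..})" by simp
qed

lemma gk_nonneg:
  fixes k f z :: "real \<Rightarrow> real"
  assumes kc: "continuous_on {0..\<delta>} k" and knn: "\<forall>\<rho>\<in>{0..\<delta>}. k \<rho> \<ge> 0"
    and f_cont: "continuous_on {0<..} f" and f_pos: "\<forall>x>0. f x > 0"
    and zc: "continuous_on {t-\<delta>..t} z" and zp: "\<And>s. s \<in> {t-\<delta>..t} \<Longrightarrow> z s > 0"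
  shows "gk k f \<delta> z t \<ge> 0"
proof -
  have "ghh k f \<delta> 0 z t \<ge> 0"
    by (rule ghh_nonneg[OF kc knn f_cont f_pos zc zp]) auto
  then show ?thesis by (simp add: ghh_gk)
qed


lemma extend_sol:
  fixes k f \<psi> z :: "real \<Rightarrow> real"
  assumes kc: "continuous_on {0..\<delta>} k" and knn: "\<forall>\<rho>\<in>{0..\<delta>}. k \<rho> \<ge> 0" and \<delta>: "\<delta> > 0"
    and f_cont: "continuous_on {0<..} f" and f_pos: "\<forall>x>0. f x > 0"
    and f_asymp: "asymp_increasing f"
    and osgood: "\<forall>\<eta>>0. (\<integral>\<^sup>+ u\<in>{\<eta><..}.
        ennreal (1 / sqrt (enn2real (\<integral>\<^sup>+ s\<in>{0<..u}. ennreal (f s) \<partial>lborel))) \<partial>lborel) = \<infinity>"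
    and \<psi>c: "continuous_on {-\<delta>..0} \<psi>" and \<psi>p: "\<forall>t\<in>{-\<delta>..0}. \<psi> t > 0"
    and T: "T > 0"
    and zc: "continuous_on {-\<delta>..<T} z" and zp: "\<forall>t\<in>{-\<delta>..<T}. 0 < z t"
    and zh: "\<forall>t\<in>{-\<delta>..0}. z t = \<psi> t"
    and zd: "\<forall>t\<in>{0..<T}. (z has_real_derivative gk k f \<delta> z t) (at t within {0..<T})"
  shows "\<exists>z'. continuous_on {-\<delta>..} z' \<and> (\<forall>t\<in>{-\<delta>..}. 0 < z' t) \<and> (\<forall>t\<in>{-\<delta>..0}. z' t = \<psi> t) \<and>
    (\<forall>t\<in>{0..}. (z' has_real_derivative gk k f \<delta> z' t) (at t within {0..})) \<and> (\<forall>t\<in>{-\<delta>..<T}. z' t = z t)"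
proof -
  have gnn: "gk k f \<delta> z t \<ge> 0" if t: "t \<in> {0..<T}" for t
    by (rule gk_nonneg[OF kc knn f_cont f_pos]) (use zc zp t in \<open>auto intro: continuous_on_subset\<close>)
  have zd': "(z has_real_derivative gk k f \<delta> z s) (at s within {0..t})" if "s \<in> {0..t}" "t < T" for s t
    by (rule has_field_derivative_subset[of _ _ _ "{0..<T}"]) (use zd that in auto)
  have zc': "continuous_on {0..t} z" if "t < T" for t
    by (rule continuous_on_subset[OF zc]) (use that \<delta> in auto)
  have zmono: "z s \<le> z t" if "0 \<le> s" "s \<le> t" "t < T" for s t
    by (rule mono_within'[OF zc' zd' gnn]) (use that in auto)
  obtain m where m: "m > 0" "\<And>r. r \<in> {-\<delta>..0} \<Longrightarrow> \<psi> r \<ge> m"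
  proof -
    have "\<exists>x\<in>{-\<delta>..0}. \<forall>y\<in>{-\<delta>..0}. \<psi> x \<le> \<psi> y"
      by (rule continuous_attains_inf[OF compact_Icc _ \<psi>c]) (use \<delta> in auto)
    then obtain x where "x \<in> {-\<delta>..0}" "\<And>y. y \<in> {-\<delta>..0} \<Longrightarrow> \<psi> x \<le> \<psi> y" by blast
    then show ?thesis using that[of "\<psi> x"] \<psi>p by auto
  qed
  obtain M where M: "\<And>r. r \<in> {-\<delta>..0} \<Longrightarrow> \<psi> r \<le> M"
  proof -
    have "\<exists>x\<in>{-\<delta>..0}. \<forall>y\<in>{-\<delta>..0}. \<psi> y \<le> \<psi> x"
      by (rule continuous_attains_sup[OF compact_Icc _ \<psi>c]) (use \<delta> in auto)
    then show ?thesis using that by blast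
  qed
  have mM: "m \<le> M" using m(2)[of 0] M[of 0] \<delta> by auto
  have z0: "z 0 = \<psi> 0" using zh \<delta> by auto
  have zm: "z t \<ge> m" if "t \<in> {-\<delta>..<T}" for t
  proof (cases "t \<le> 0")
    case True then show ?thesis using zh m that by auto
  next
    case False then show ?thesis using zmono[of 0 t] that z0 m(2)[of 0] \<delta> by auto
  qed
  obtain Kmax where Kmax: "\<And>\<rho>. \<rho> \<in> {0..\<delta>} \<Longrightarrow> k \<rho> \<le> Kmax"
  proof -
    have "\<exists>x\<in>{0..\<delta>}. \<forall>y\<in>{0..\<delta>}. k y \<le> k x"
      by (rule continuous_attains_sup[OF compact_Icc _ kc]) (use \<delta> in auto)
    then show ?thesis using that by blast
  qed
  define K where "K = max Kmax 0 + 1"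
  have K: "K > 0" "\<forall>\<rho>\<in>{0..\<delta>}. k \<rho> \<le> K"
  proof -
    show "K > 0" by (simp add: K_def)
    have "Kmax \<le> max Kmax 0" by simp
    then show "\<forall>\<rho>\<in>{0..\<delta>}. k \<rho> \<le> K" using Kmax unfolding K_def by force
  qed
  obtain FH where FH: "FH > 0" "\<And>y. y \<in> {m..M} \<Longrightarrow> f y \<le> FH"
  proof -
    have "\<exists>x\<in>{m..M}. \<forall>y\<in>{m..M}. f y \<le> f x"
      by (rule continuous_attains_sup[OF compact_Icc _ continuous_on_subset[OF f_cont]]) (use mM m in auto)
    then obtain x where "x \<in> {m..M}" "\<forall>y\<in>{m..M}. f y \<le> f x" by blast
    then show ?thesis using that[of "f x"] f_pos m by auto
  qed
  define P0 where "P0 = \<delta> * FH + 1"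
  have P0: "P0 > 0" using \<delta> FH by (simp add: P0_def add_pos_pos)
  obtain R where R: "\<And>a' b z d t. a' \<le> b \<Longrightarrow> b - a' \<le> T \<Longrightarrow> continuous_on {a'..b} z \<Longrightarrow>
      (\<And>t. t \<in> {a'..b} \<Longrightarrow> (z has_real_derivative d t) (at t within {a'..b})) \<Longrightarrow>
      (\<And>t. t \<in> {a'..b} \<Longrightarrow> d t \<le> K * (P0 + integral {a'..t} (\<lambda>s. f (z s)))) \<Longrightarrow>
      z a' \<le> \<psi> 0 \<Longrightarrow> (\<And>t. t \<in> {a'..b} \<Longrightarrow> z t \<ge> m) \<Longrightarrow> t \<in> {a'..b} \<Longrightarrow> z t \<le> R"
  proof (rule bound[OF f_cont f_pos f_asymp osgood m(1) K(1) P0, of T "\<psi> 0"])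
    fix R assume "\<And>a' b z d t. a' \<le> b \<Longrightarrow> b - a' \<le> T \<Longrightarrow> continuous_on {a'..b} z \<Longrightarrow>
      (\<And>t. t \<in> {a'..b} \<Longrightarrow> (z has_real_derivative d t) (at t within {a'..b})) \<Longrightarrow>
      (\<And>t. t \<in> {a'..b} \<Longrightarrow> d t \<le> K * (P0 + integral {a'..t} (\<lambda>s. f (z s)))) \<Longrightarrow>
      z a' \<le> \<psi> 0 \<Longrightarrow> (\<And>t. t \<in> {a'..b} \<Longrightarrow> z t \<ge> m) \<Longrightarrow> t \<in> {a'..b} \<Longrightarrow> z t \<le> R"
    then show thesis by (rule that)
  qed
  have Fc: "continuous_on {-\<delta>..t} (\<lambda>s. f (z s))" if "t < T" for t
    by (rule continuous_on_compose2[OF f_cont continuous_on_subset[OF zc]]) (use zp that in auto)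
  have zR: "z t \<le> R" if t: "t \<in> {0..<T}" for t
  proof (rule R[of 0 t z "gk k f \<delta> z"])
    fix s assume s: "s \<in> {0..t}"
    have Fnn: "\<And>x. x \<in> {-\<delta>..s} \<Longrightarrow> 0 \<le> f (z x)" using zp f_pos s t by (auto intro: less_imp_le)
    have Fc': "continuous_on {-\<delta>..s} (\<lambda>r. f (z r))" using Fc[of s] s t by auto
    have "gk k f \<delta> z s = ghh k f \<delta> 0 z s" by (simp add: ghh_gk)
    also have "\<dots> \<le> K * integral {-\<delta>..s} (\<lambda>r. f (z r))"
      unfolding ghh_def using kernel_bound[OF kc knn K(2) Fc' Fnn, of 0] s \<delta> by simp
    finally have g1: "gk k f \<delta> z s \<le> K * integral {-\<delta>..s} (\<lambda>r. f (z r))" .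
    have "integral {-\<delta>..s} (\<lambda>r. f (z r)) = integral {-\<delta>..0} (\<lambda>r. f (z r)) + integral {0..s} (\<lambda>r. f (z r))"
      using Henstock_Kurzweil_Integration.integral_combine[OF _ _ integrable_continuous_interval[OF Fc'], of 0] s \<delta>
      by simp
    moreover have "integral {-\<delta>..0} (\<lambda>r. f (z r)) \<le> integral {-\<delta>..0} (\<lambda>r. FH)"
    proof (rule integral_le)
      show "(\<lambda>r. f (z r)) integrable_on {-\<delta>..0}"
        by (rule integrable_continuous_interval, rule continuous_on_subset[OF Fc']) (use s in auto)
      fix r assume r: "r \<in> {-\<delta>..0}"
      show "f (z r) \<le> FH" using zh r m(2)[OF r] M[OF r] FH(2) by auto
    qed auto
    moreover have "integral {-\<delta>..0} (\<lambda>r. FH) = \<delta> * FH" using \<delta> by simp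
    ultimately have "integral {-\<delta>..s} (\<lambda>r. f (z r)) \<le> P0 + integral {0..s} (\<lambda>r. f (z r))"
      unfolding P0_def by linarith
    then have "K * integral {-\<delta>..s} (\<lambda>r. f (z r)) \<le> K * (P0 + integral {0..s} (\<lambda>r. f (z r)))"
      using K(1) by (intro mult_left_mono) auto
    with g1 show "gk k f \<delta> z s \<le> K * (P0 + integral {0..s} (\<lambda>s. f (z s)))" by simp
    show "(z has_real_derivative gk k f \<delta> z s) (at s within {0..t})" by (rule zd'[OF s]) (use t in auto)
    show "m \<le> z s" using zm s t \<delta> by auto
  qed (use t zc' z0 in auto)
  define zT where "zT = (SUP t\<in>{0..<T}. z t)"
  have bdd: "bdd_above (z ` {0..<T})" using zR by (intro bdd_aboveI[of _ R]) auto
  have ne: "{0..<T} \<noteq> {}" using T by auto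
  have zle: "z t \<le> zT" if "t \<in> {0..<T}" for t unfolding zT_def by (rule cSUP_upper[OF that bdd])
  have ztend: "(z \<longlongrightarrow> zT) (at_left T)"
  proof (rule increasing_tendsto)
    show "\<forall>\<^sub>F x in at_left T. z x \<le> zT"
      using eventually_at_left_real[of 0 T, OF T] by (rule eventually_mono) (auto intro: zle)
    fix y assume "y < zT"
    then obtain t0 where t0: "t0 \<in> {0..<T}" "y < z t0" unfolding zT_def using less_cSUP_iff[OF ne bdd] by auto
    show "\<forall>\<^sub>F x in at_left T. y < z x"
      using eventually_at_left_real[of t0 T] t0
      by (auto elim!: eventually_mono) (use t0 zmono in \<open>force intro: less_le_trans\<close>)
  qed
  have zTpos: "zT > 0" using zle[of 0] zp T \<delta> by (smt (verit) atLeastLessThan_iff)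
  define zh' where "zh' = (\<lambda>t. if t < T then z t else zT)"
  have ev: "\<forall>\<^sub>F x in at_left T. zh' x = z x"
    using eventually_at_left_real[of 0 T, OF T] by (rule eventually_mono) (auto simp: zh'_def)
  have zh'c: "continuous_on {-\<delta>..T} zh'"
  proof (clarsimp simp: continuous_on_eq_continuous_within)
    fix t assume t: "- \<delta> \<le> t" "t \<le> T"
    show "continuous (at t within {-\<delta>..T}) zh'"
    proof (cases "t < T")
      case True
      have "continuous (at t within {-\<delta>..<T}) z"
        using zc t True by (simp add: continuous_on_eq_continuous_within)
      moreover have "at t within {-\<delta>..<T} = at t within {-\<delta>..T}"
        by (rule at_within_nhd[where S="{..<T}"]) (use True in auto)
      ultimately have "continuous (at t within {-\<delta>..T}) z" by simp
      then show ?thesis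
        by (rule continuous_transform_within[where \<delta>="T - t"]) (use True t in \<open>auto simp: zh'_def dist_real_def\<close>)
    next
      case False
      then have tT: "t = T" using t by simp
      have "at T within {-\<delta>..T} = at_left T" by (rule at_within_Icc_at_left) (use T \<delta> in auto)
      moreover have "(zh' \<longlongrightarrow> zh' T) (at_left T)" using ztend tendsto_cong[OF ev] by (simp add: zh'_def)
      ultimately show ?thesis unfolding continuous_within tT by simp
    qed
  qed
  have zh'p: "zh' t > 0" if "t \<in> {-\<delta>..T}" for t using that zp zTpos by (auto simp: zh'_def)
  define g where "g = gk k f \<delta> zh'"
  have Fh: "continuous_on {-\<delta>..T} (\<lambda>r. f (zh' r))"
    by (rule continuous_on_compose2[OF f_cont zh'c]) (use zh'p in auto)
  have gc: "continuous_on {0..T} g"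
  proof -
    have "continuous_on {0..T} (ghh k f \<delta> 0 zh')"
      unfolding ghh_def by (rule conv_cont[OF kc Fh]) auto
    then show ?thesis unfolding g_def by (simp add: ghh_gk)
  qed
  have geq: "g s = gk k f \<delta> z s" if "s < T" for s
    unfolding g_def by (rule gk_cong) (use that in \<open>auto simp: zh'_def\<close>)
  have zeq1: "z t = \<psi> 0 + integral {0..t} g" if t: "t \<in> {0..<T}" for t
  proof -
    have "(gk k f \<delta> z has_integral (z t - z 0)) {0..t}"
      by (rule fundamental_theorem_of_calculus)
         (use t zd' in \<open>auto simp: has_real_derivative_iff_has_vector_derivative[symmetric]\<close>)
    then have "integral {0..t} (gk k f \<delta> z) = z t - z 0" by (rule integral_unique)
    moreover have "integral {0..t} g = integral {0..t} (gk k f \<delta> z)"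
      by (rule integral_cong) (use t geq in auto)
    ultimately show ?thesis using z0 by simp
  qed
  have zeq: "zh' t = \<psi> 0 + integral {0..t} g" if t: "t \<in> {0..T}" for t
  proof (cases "t < T")
    case True then show ?thesis using zeq1[of t] t by (simp add: zh'_def)
  next
    case False
    then have tT: "t = T" using t by simp
    define I where "I = (\<lambda>t. \<psi> 0 + integral {0..t} g)"
    have "continuous_on {0..T} I" unfolding I_def
      by (intro continuous_intros indefinite_integral_continuous_1 integrable_continuous_interval gc)
    then have "continuous (at T within {0..T}) I" using T by (simp add: continuous_on_eq_continuous_within)
    moreover have "at T within {0..T} = at_left T" by (rule at_within_Icc_at_left) (use T in auto)
    ultimately have "(I \<longlongrightarrow> I T) (at_left T)" by (simp add: continuous_within)
    moreover have "\<forall>\<^sub>F x in at_left T. I x = z x"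
      using eventually_at_left_real[of 0 T, OF T] by (rule eventually_mono) (auto simp: I_def zeq1)
    ultimately have "(z \<longlongrightarrow> I T) (at_left T)" using tendsto_cong by blast
    from tendsto_unique[OF trivial_limit_at_left_real ztend this]
    show ?thesis using tT by (simp add: zh'_def I_def)
  qed
  have sol1: "solI k f \<delta> 0 \<psi> T zh'" unfolding solI_def
  proof (intro conjI ballI)
    show "continuous_on {0-\<delta>..T} zh'" using zh'c by simp
    fix t assume "t \<in> {0-\<delta>..T}" then show "0 < zh' t" using zh'p by simp
  next
    fix t assume "t \<in> {0-\<delta>..0}" then show "zh' t = \<psi> t" using zh T by (auto simp: zh'_def)
  next
    fix t assume t: "t \<in> {0..T}"
    from int_deriv[OF gc zeq t] show "(zh' has_real_derivative gk k f \<delta> zh' t) (at t within {0..T})"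
      by (simp add: g_def)
  qed
  obtain w where wc: "continuous_on {T-\<delta>..} w" and wp: "\<forall>t\<in>{T-\<delta>..}. 0 < w t"
    and wh: "\<forall>t\<in>{T-\<delta>..T}. w t = zh' t"
    and wd: "\<forall>t\<in>{T..}. (w has_real_derivative gk k f \<delta> w t) (at t within {T..})"
  proof -
    have "continuous_on {T-\<delta>..T} zh'" by (rule continuous_on_subset[OF zh'c]) (use T in auto)
    moreover have "\<forall>t\<in>{T-\<delta>..T}. zh' t > 0" using zh'p T by auto
    ultimately show ?thesis
      using global_sol[OF kc knn \<delta> f_cont f_pos f_asymp osgood, of T zh'] that by blast
  qed
  define z' where "z' = (\<lambda>t. if t \<le> T then zh' t else w t)"
  have all: "solI k f \<delta> 0 \<psi> c z'" if c: "c \<ge> T" for c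
  proof -
    have s2: "solI k f \<delta> T zh' c w" unfolding solI_def
    proof (intro conjI ballI)
      show "continuous_on {T-\<delta>..c} w" by (rule continuous_on_subset[OF wc]) auto
      fix t assume "t \<in> {T-\<delta>..c}" then show "0 < w t" using wp by auto
    next
      fix t assume "t \<in> {T-\<delta>..T}" then show "w t = zh' t" using wh by auto
    next
      fix t assume t: "t \<in> {T..c}"
      show "(w has_real_derivative gk k f \<delta> w t) (at t within {T..c})"
        by (rule has_field_derivative_subset[of _ _ _ "{T..}"]) (use wd t in auto)
    qed
    show ?thesis unfolding z'_def by (rule glue[OF _ c \<delta> sol1 s2]) (use T in auto)
  qed
  have "continuous_on {0-\<delta>..} z' \<and> (\<forall>t\<in>{0-\<delta>..}. 0 < z' t) \<and> (\<forall>t\<in>{0-\<delta>..0}. z' t = \<psi> t) \<and>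
    (\<forall>t\<in>{0..}. (z' has_real_derivative gk k f \<delta> z' t) (at t within {0..}))"
    by (rule sol_of_all, rule all, assumption)
  moreover have "\<forall>t\<in>{-\<delta>..<T}. z' t = z t" by (auto simp: z'_def zh'_def)
  ultimately show ?thesis by (intro exI[of _ z']) simp
qed


lemma gk_const: "gk (\<lambda>_. C) f \<delta> z t = C * integral {t-\<delta>..t} (\<lambda>s. f (z s))"
  unfolding gk_def by simp

theorem lemma6p4:
  fixes C \<delta> :: real and f \<psi> w :: "real \<Rightarrow> real"
  assumes C_pos: "C > 0" and delta_pos: "\<delta> > 0"
    and f_cont: "continuous_on {0<..} f" and f_pos: "\<forall>x>0. f x > 0"
    and f_asymp: "asymp_increasing f"
    and f_superlin: "filterlim (\<lambda>x. f x / x) at_top at_top"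
    and psi_cont: "continuous_on {-\<delta>..0} \<psi>" and psi_pos: "\<forall>t\<in>{-\<delta>..0}. \<psi> t > 0"
    and osgood: "\<forall>\<eta>>0. (\<integral>\<^sup>+ u\<in>{\<eta><..}.
        ennreal (1 / sqrt (enn2real (\<integral>\<^sup>+ s\<in>{0<..u}. ennreal (f s) \<partial>lborel))) \<partial>lborel) = \<infinity>"
  shows "((\<exists>z. dde_sol1 C \<delta> f \<psi> {0..} z) \<and>
          (\<forall>T z. T > 0 \<and> dde_sol1 C \<delta> f \<psi> {0..<T} z \<longrightarrow>
             (\<exists>z'. dde_sol1 C \<delta> f \<psi> {0..} z' \<and> (\<forall>t\<in>{-\<delta>..<T}. z' t = z t))))
       \<and> (continuous_on {0..} w \<and> (\<forall>t\<ge>0. w t \<ge> 0) \<and> w 0 > 0 \<longrightarrow>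
          (\<exists>y. dde_sol2 \<delta> w f \<psi> {0..} y) \<and>
          (\<forall>T y. T > 0 \<and> dde_sol2 \<delta> w f \<psi> {0..<T} y \<longrightarrow>
             (\<exists>y'. dde_sol2 \<delta> w f \<psi> {0..} y' \<and> (\<forall>t\<in>{-\<delta>..<T}. y' t = y t))))"
proof -
  have U1: "{-\<delta>..0} \<union> {0..} = {-\<delta>..}" using delta_pos by auto
  have U2: "{-\<delta>..0} \<union> {0..<T} = {-\<delta>..<T}" if "T > 0" for T using delta_pos that by auto
  have psi_cont': "continuous_on {0-\<delta>..0} \<psi>" and psi_pos': "\<forall>t\<in>{0-\<delta>..0}. \<psi> t > 0"
    using psi_cont psi_pos by auto
  have main: "(\<exists>z. continuous_on {-\<delta>..} z \<and> (\<forall>t\<in>{-\<delta>..}. 0 < z t) \<and> (\<forall>t\<in>{-\<delta>..0}. z t = \<psi> t) \<and>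
      (\<forall>t\<in>{0..}. (z has_real_derivative gk k f \<delta> z t) (at t within {0..}))) \<and>
    (\<forall>T z. T > 0 \<and> continuous_on {-\<delta>..<T} z \<and> (\<forall>t\<in>{-\<delta>..<T}. 0 < z t) \<and> (\<forall>t\<in>{-\<delta>..0}. z t = \<psi> t) \<and>
      (\<forall>t\<in>{0..<T}. (z has_real_derivative gk k f \<delta> z t) (at t within {0..<T})) \<longrightarrow>
      (\<exists>z'. continuous_on {-\<delta>..} z' \<and> (\<forall>t\<in>{-\<delta>..}. 0 < z' t) \<and> (\<forall>t\<in>{-\<delta>..0}. z' t = \<psi> t) \<and>
      (\<forall>t\<in>{0..}. (z' has_real_derivative gk k f \<delta> z' t) (at t within {0..})) \<and> (\<forall>t\<in>{-\<delta>..<T}. z' t = z t)))"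
    if kc: "continuous_on {0..\<delta>} k" and knn: "\<forall>\<rho>\<in>{0..\<delta>}. k \<rho> \<ge> 0" for k
  proof (intro conjI allI impI)
    show "\<exists>z. continuous_on {-\<delta>..} z \<and> (\<forall>t\<in>{-\<delta>..}. 0 < z t) \<and> (\<forall>t\<in>{-\<delta>..0}. z t = \<psi> t) \<and>
      (\<forall>t\<in>{0..}. (z has_real_derivative gk k f \<delta> z t) (at t within {0..}))"
      using global_sol[OF kc knn delta_pos f_cont f_pos f_asymp osgood psi_cont' psi_pos'] by simp
    fix T z assume H: "T > 0 \<and> continuous_on {-\<delta>..<T} z \<and> (\<forall>t\<in>{-\<delta>..<T}. 0 < z t) \<and> (\<forall>t\<in>{-\<delta>..0}. z t = \<psi> t) \<and>
      (\<forall>t\<in>{0..<T}. (z has_real_derivative gk k f \<delta> z t) (at t within {0..<T}))"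
    then show "\<exists>z'. continuous_on {-\<delta>..} z' \<and> (\<forall>t\<in>{-\<delta>..}. 0 < z' t) \<and> (\<forall>t\<in>{-\<delta>..0}. z' t = \<psi> t) \<and>
      (\<forall>t\<in>{0..}. (z' has_real_derivative gk k f \<delta> z' t) (at t within {0..})) \<and> (\<forall>t\<in>{-\<delta>..<T}. z' t = z t)"
      using extend_sol[OF kc knn delta_pos f_cont f_pos f_asymp osgood psi_cont psi_pos] by blast
  qed
  show ?thesis
  proof (intro conjI impI)
    have kc: "continuous_on {0..\<delta>} (\<lambda>_. C)" by simp
    have knn: "\<forall>\<rho>\<in>{0..\<delta>}. (\<lambda>_. C) \<rho> \<ge> 0" using C_pos by simp
    note M = main[OF kc knn]
    show "\<exists>z. dde_sol1 C \<delta> f \<psi> {0..} z"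
      using M unfolding dde_sol1_def U1 gk_const by blast
    show "\<forall>T z. T > 0 \<and> dde_sol1 C \<delta> f \<psi> {0..<T} z \<longrightarrow>
             (\<exists>z'. dde_sol1 C \<delta> f \<psi> {0..} z' \<and> (\<forall>t\<in>{-\<delta>..<T}. z' t = z t))"
    proof (intro allI impI)
      fix T z assume H: "T > 0 \<and> dde_sol1 C \<delta> f \<psi> {0..<T} z"
      then have "T > 0" by simp
      with H M show "\<exists>z'. dde_sol1 C \<delta> f \<psi> {0..} z' \<and> (\<forall>t\<in>{-\<delta>..<T}. z' t = z t)"
        unfolding dde_sol1_def U1 U2[OF \<open>T > 0\<close>] gk_const by blast
    qed
  next
    assume W: "continuous_on {0..} w \<and> (\<forall>t\<ge>0. w t \<ge> 0) \<and> w 0 > 0"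
    have kc: "continuous_on {0..\<delta>} w" using W by (auto intro: continuous_on_subset)
    have knn: "\<forall>\<rho>\<in>{0..\<delta>}. w \<rho> \<ge> 0" using W by auto
    note M = main[OF kc knn]
    show "\<exists>y. dde_sol2 \<delta> w f \<psi> {0..} y"
      using M unfolding dde_sol2_def U1 gk_def by blast
    show "\<forall>T y. T > 0 \<and> dde_sol2 \<delta> w f \<psi> {0..<T} y \<longrightarrow>
             (\<exists>y'. dde_sol2 \<delta> w f \<psi> {0..} y' \<and> (\<forall>t\<in>{-\<delta>..<T}. y' t = y t))"
    proof (intro allI impI)
      fix T y assume H: "T > 0 \<and> dde_sol2 \<delta> w f \<psi> {0..<T} y"
      then have "T > 0" by simp
      with H M show "\<exists>y'. dde_sol2 \<delta> w f \<psi> {0..} y' \<and> (\<forall>t\<in>{-\<delta>..<T}. y' t = y t)"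
        unfolding dde_sol2_def U1 U2[OF \<open>T > 0\<close>] gk_def by blast
    qed
  qed
qed


end
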